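(* The Borel measure $\nu$ on $[0,1]$ given by $d\nu=\frac{dx}{x}$ is invariant under the OOCF map $T$ (i.e. $\nu(T^{-1}A)=\nu(A)$ for every Borel $A\subseteq[0,1]$), satisfies $\nu([0,1])=\infty$, and $T$ is ergodic with respect to $\nu$.
   Context: For integers $k\ge1$ put $B(k+1,-1)=\left[\frac{k-1}{k},\frac{2k-1}{2k+1}\right]$ and $B(k,1)=\left[\frac{2k-1}{2k+1},\frac{k}{k+1}\right]$. The OOCF map $T:[0,1]\to[0,1]$ is $T(x)=\frac{kx-(k-1)}{k-(k+1)x}$ for $x\in B(k+1,-1)$, $T(x)=\frac{k-(k+1)x}{kx-(k-1)}$ for $x\in B(k,1)$ ($k\ge1$; the formulas agree at common endpoints), and $T(1)=1$. *)

theory Defs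
  imports "HOL-Analysis.Analysis"
begin

text \<open>For 0 <= x < 1 the index k >= 1 with x in [(k-1)/k, k/(k+1)) is
  k = floor (1/(1-x)); then x lies in Bminus k (first branch) or Bplus k (second branch).
  At common endpoints the two formulas agree, so this choice is immaterial. T(1) = 1.
  Values outside [0,1] are irrelevant (the measure space is [0,1]).\<close>
definition oocf_T :: "real \<Rightarrow> real" where
  "oocf_T x = (if x = 1 then 1 else
     (let k = real (nat \<lfloor>1 / (1 - x)\<rfloor>) in
       if x \<le> (2 * k - 1) / (2 * k + 1)
       then (k * x - (k - 1)) / (k - (k + 1) * x)
       else (k - (k + 1) * x) / (k * x - (k - 1))))"

text \<open>The Borel measure d nu = dx/x on [0,1] (the density at the null point 0 is irrelevant).\<close>
definition nu :: "real measure" where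
  "nu = density (restrict_space lborel {0..1}) (\<lambda>x. ennreal (1 / x))"

definition measure_preserving_map :: "'a measure \<Rightarrow> ('a \<Rightarrow> 'a) \<Rightarrow> bool" where
  "measure_preserving_map M T \<longleftrightarrow> T \<in> M \<rightarrow>\<^sub>M M \<and>
     (\<forall>A \<in> sets M. emeasure M (T -` A \<inter> space M) = emeasure M A)"

definition ergodic_map :: "'a measure \<Rightarrow> ('a \<Rightarrow> 'a) \<Rightarrow> bool" where
  "ergodic_map M T \<longleftrightarrow>
     (\<forall>A \<in> sets M. T -` A \<inter> space M = A \<longrightarrow> emeasure M A = 0 \<or> emeasure M (space M - A) = 0)"

end

theory Submission
  imports Defs
begin


fun mob :: "real\<times>real\<times>real\<times>real \<Rightarrow> real \<Rightarrow> real" where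
  "mob (a,b,c,d) y = (a*y+b)/(c*y+d)"
fun gd :: "real\<times>real\<times>real\<times>real \<Rightarrow> real \<Rightarrow> real" where
  "gd (a,b,c,d) y = c*y+d"
fun mdet :: "real\<times>real\<times>real\<times>real \<Rightarrow> real" where
  "mdet (a,b,c,d) = a*d-b*c"
fun mmul :: "real\<times>real\<times>real\<times>real \<Rightarrow> real\<times>real\<times>real\<times>real \<Rightarrow> real\<times>real\<times>real\<times>real" where
  "mmul (a,b,c,d) (a',b',c',d') = (a*a'+b*c', a*b'+b*d', c*a'+d*c', c*b'+d*d')"

definition B1 :: "real \<Rightarrow> real\<times>real\<times>real\<times>real" where "B1 k = (k, k-1, k+1, k)"
definition B2 :: "real \<Rightarrow> real\<times>real\<times>real\<times>real" where "B2 k = (k-1, k, k, k+1)"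

lemma floor_k:
  fixes x :: real and n :: nat
  assumes "n \<ge> 1" "real n \<le> 1/(1-x)" "1/(1-x) < real n + 1"
  shows "real (nat \<lfloor>1/(1-x)\<rfloor>) = real n"
proof -
  have "\<lfloor>1/(1-x)\<rfloor> = int n" using assms by (simp add: floor_eq_iff)
  then show ?thesis by simp
qed

lemma branch1:
  fixes n :: nat and y :: real
  assumes n: "n \<ge> 1" and y: "0 \<le> y" "y \<le> 1"
  shows "oocf_T (mob (B1 n) y) = y" "0 \<le> mob (B1 n) y" "mob (B1 n) y < 1"
proof -
  define k where "k = real n"
  have k: "k \<ge> 1" using n k_def by simp
  define x where "x = mob (B1 n) y"
  have x: "x = (k*y + (k-1))/((k+1)*y+k)" by (simp add: x_def B1_def k_def)
  have den: "(k+1)*y+k > 0" using k y by (intro add_nonneg_pos mult_nonneg_nonneg) auto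
  have omx: "1 - x = (y+1)/((k+1)*y+k)" using den by (simp add: x field_simps)
  have inv: "1/(1-x) = k + y/(y+1)" using den y by (simp add: omx field_simps)
  have "y/(y+1) < 1" using y by simp
  moreover have "y/(y+1) \<ge> 0" using y by simp
  ultimately have fk: "real (nat \<lfloor>1/(1-x)\<rfloor>) = k"
    unfolding k_def by (intro floor_k n) (auto simp: inv k_def)
  have "1 - x > 0" using omx den y by simp
  then have x1: "x < 1" by simp
  have x0: "0 \<le> x" using x den k y by (simp add: divide_nonneg_pos)
  have le: "x \<le> (2*k-1)/(2*k+1)"
    using den k y by (simp add: x field_simps)
  have "k - (k+1)*x = 1/((k+1)*y+k)" using den by (simp add: x field_simps) 
  moreover have "k*x - (k-1) = y/((k+1)*y+k)" using den by (simp add: x field_simps) 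
  ultimately have "(k*x - (k-1))/(k - (k+1)*x) = y" using den by simp
  then show "oocf_T (mob (B1 n) y) = y"
    unfolding x_def[symmetric] oocf_T_def Let_def using x1 fk le by simp
  show "0 \<le> mob (B1 n) y" "mob (B1 n) y < 1" using x0 x1 x_def by auto
qed

lemma branch2:
  fixes n :: nat and y :: real
  assumes n: "n \<ge> 1" and y: "0 \<le> y" "y \<le> 1"
  shows "oocf_T (mob (B2 n) y) = y" "0 \<le> mob (B2 n) y" "mob (B2 n) y < 1"
proof -
  define k where "k = real n"
  have k: "k \<ge> 1" using n k_def by simp
  define x where "x = mob (B2 n) y"
  have x: "x = ((k-1)*y + k)/(k*y+(k+1))" by (simp add: x_def B2_def k_def)
  have den: "k*y+(k+1) > 0" using k y by (intro add_nonneg_pos mult_nonneg_nonneg) auto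
  have omx: "1 - x = (y+1)/(k*y+(k+1))" using den by (simp add: x field_simps)
  have inv: "1/(1-x) = k + 1/(y+1)" using den y by (simp add: omx field_simps)
  have "1 - x > 0" using omx den y by simp
  then have x1: "x < 1" by simp
  have x0: "0 \<le> x" using x den k y by (simp add: divide_nonneg_pos)
  show "0 \<le> mob (B2 n) y" "mob (B2 n) y < 1" using x0 x1 x_def by auto
  show "oocf_T (mob (B2 n) y) = y"
  proof (cases "y = 0")
    case True
    have xk: "x = k/(k+1)" using True by (simp add: x)
    have inv0: "1/(1-x) = k+1" using True inv by simp
    have fk: "real (nat \<lfloor>1/(1-x)\<rfloor>) = k+1"
      unfolding k_def using floor_k[of "n+1" x] inv0 k_def by simp
    have le: "x \<le> (2*(k+1)-1)/(2*(k+1)+1)" using k by (simp add: xk field_simps)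
    have "(k+1)*x - (k+1-1) = 0" using k by (simp add: xk field_simps)
    then show ?thesis
      unfolding x_def[symmetric] oocf_T_def Let_def using x1 fk le True by simp
  next
    case False
    then have yp: "y > 0" using y by simp
    have "1/(y+1) < 1" using yp by simp
    moreover have "1/(y+1) \<ge> 0" using y by simp
    ultimately have fk: "real (nat \<lfloor>1/(1-x)\<rfloor>) = k"
      unfolding k_def by (intro floor_k n) (auto simp: inv k_def)
    have ge: "x \<ge> (2*k-1)/(2*k+1)"
      using den k y by (simp add: x field_simps)
    show ?thesis
    proof (cases "x \<le> (2*k-1)/(2*k+1)")
      case True
      then have xe: "x = (2*k-1)/(2*k+1)" using ge by simp
      have "((k-1)*y + k)*(2*k+1) = (2*k-1)*(k*y+(k+1))"
        using xe den k by (simp add: x field_simps)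
      then have y1: "y = 1" by (simp add: algebra_simps)
      have "(k*x - (k-1))/(k - (k+1)*x) = 1" using k by (simp add: xe field_simps)
      then show ?thesis
        unfolding x_def[symmetric] oocf_T_def Let_def using x1 fk True y1 by simp
    next
      case False
      have "k - (k+1)*x = y/(k*y+(k+1))" using den by (simp add: x field_simps) 
      moreover have "k*x - (k-1) = 1/(k*y+(k+1))" using den by (simp add: x field_simps) 
      ultimately have "(k - (k+1)*x)/(k*x - (k-1)) = y" using den by simp
      then show ?thesis
        unfolding x_def[symmetric] oocf_T_def Let_def using x1 fk False by simp
    qed
  qed
qed


definition kx :: "real \<Rightarrow> nat" where "kx x = nat \<lfloor>1/(1-x)\<rfloor>"
definition Bx :: "real \<Rightarrow> real\<times>real\<times>real\<times>real" where
  "Bx x = (let k = real (kx x) in if x \<le> (2*k-1)/(2*k+1) then B1 k else B2 k)"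

lemma kx_bounds:
  assumes "0 \<le> x" "x < 1"
  shows "kx x \<ge> 1" "(real (kx x) - 1)/real (kx x) \<le> x" "x < real (kx x)/(real (kx x)+1)"
proof -
  have p: "1 - x > 0" using assms by simp
  have ge1: "1/(1-x) \<ge> 1" using assms p by (simp add: field_simps)
  then have fl: "\<lfloor>1/(1-x)\<rfloor> \<ge> 1" by (simp add: le_floor_iff)
  then have "nat \<lfloor>1/(1-x)\<rfloor> \<ge> nat 1" by (rule nat_mono)
  then show k1: "kx x \<ge> 1" unfolding kx_def by simp
  have e: "real (kx x) = of_int \<lfloor>1/(1-x)\<rfloor>" unfolding kx_def by (rule of_nat_nat) (use fl in linarith)
  have a: "real (kx x) \<le> 1/(1-x)" using e by simp
  have b: "1/(1-x) < real (kx x) + 1" using e by linarith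
  have kp: "real (kx x) > 0" using k1 by simp
  from a p kp show "(real (kx x) - 1)/real (kx x) \<le> x" by (simp add: field_simps)
  from b p kp show "x < real (kx x)/(real (kx x)+1)" by (simp add: field_simps)
qed

lemma T_kx: "x \<noteq> 1 \<Longrightarrow> oocf_T x = (let k = real (kx x) in
       if x \<le> (2 * k - 1) / (2 * k + 1)
       then (k * x - (k - 1)) / (k - (k + 1) * x)
       else (k - (k + 1) * x) / (k * x - (k - 1)))"
  unfolding oocf_T_def kx_def by simp

lemma decomp:
  assumes "0 \<le> x" "x < 1"
  shows "0 \<le> oocf_T x" "oocf_T x \<le> 1" "mob (Bx x) (oocf_T x) = x"
    "Bx x = B1 (real (kx x)) \<or> Bx x = B2 (real (kx x))"
proof -
  define k where "k = real (kx x)"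
  have k1: "k \<ge> 1" and lo: "(k-1)/k \<le> x" and hi: "x < k/(k+1)"
    using kx_bounds[OF assms] k_def by auto
  have lo': "k - 1 \<le> k*x" using lo k1 by (simp add: field_simps)
  have hi': "k*x < k + 1 - x - 1" using hi k1 by (simp add: field_simps)
  have T: "oocf_T x = (if x \<le> (2 * k - 1) / (2 * k + 1)
       then (k * x - (k - 1)) / (k - (k + 1) * x)
       else (k - (k + 1) * x) / (k * x - (k - 1)))"
    using T_kx[of x] assms k_def by (simp add: Let_def)
  have Bx: "Bx x = (if x \<le> (2*k-1)/(2*k+1) then B1 k else B2 k)"
    unfolding Bx_def k_def Let_def by simp
  show "Bx x = B1 (real (kx x)) \<or> Bx x = B2 (real (kx x))" using Bx k_def by auto
  have all: "0 \<le> oocf_T x \<and> oocf_T x \<le> 1 \<and> mob (Bx x) (oocf_T x) = x"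
  proof (cases "x \<le> (2*k-1)/(2*k+1)")
    case True
    have th: "(2*k+1)*x \<le> 2*k-1" using True k1 by (simp add: field_simps)
    have d: "k - (k+1)*x > 0" using hi' by (simp add: algebra_simps)
    define y where "y = (k * x - (k - 1)) / (k - (k + 1) * x)"
    have y0: "y \<ge> 0" using d lo' by (simp add: y_def)
    have y1: "y \<le> 1" using d th by (simp add: y_def field_simps)
    have "mob (B1 k) y = x" using d k1 by (simp add: B1_def y_def field_simps)
    then show ?thesis using T True Bx y0 y1 y_def by simp
  next
    case False
    have th: "(2*k+1)*x > 2*k-1" using False k1 by (simp add: field_simps)
    have d: "k*x - (k-1) > 0"
    proof (rule ccontr)
      assume "\<not> ?thesis"
      then have "k*x \<le> k-1" by simp
      then have "(2*k+1)*(k*x) \<le> (2*k+1)*(k-1)" by (rule mult_left_mono) (use k1 in simp)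
      moreover have "k*((2*k+1)*x) > k*(2*k-1)" using th k1 by (intro mult_strict_left_mono) auto
      ultimately show False by (simp add: algebra_simps)
    qed
    define y where "y = (k - (k + 1) * x) / (k * x - (k - 1))"
    have y0: "y \<ge> 0" using d hi' by (simp add: y_def algebra_simps)
    have y1: "y \<le> 1" using d th by (simp add: y_def field_simps)
    have "mob (B2 k) y = x" using d k1 by (simp add: B2_def y_def field_simps)
    then show ?thesis using T False Bx y0 y1 y_def by simp
  qed
  then show "0 \<le> oocf_T x" "oocf_T x \<le> 1" "mob (Bx x) (oocf_T x) = x" using all by auto
qed

lemma T_range: "x \<in> {0..1} \<Longrightarrow> oocf_T x \<in> {0..1}"
  using decomp[of x] by (cases "x = 1") (auto simp: oocf_T_def)

lemma T_small:
  assumes "0 \<le> x" "x \<le> 1/3"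
  shows "kx x = 1" "Bx x = B1 1" "oocf_T x = x/(1-2*x)"
proof -
  have "1/(1-x) < 2" "1/(1-x) \<ge> 1" using assms by (auto simp: field_simps)
  then have "\<lfloor>1/(1-x)\<rfloor> = 1" by (simp add: floor_eq_iff)
  then show k: "kx x = 1" by (simp add: kx_def)
  show "Bx x = B1 1" using assms k by (simp add: Bx_def)
  show "oocf_T x = x/(1-2*x)" using assms k T_kx[of x] by (simp add: Let_def)
qed

lemma gd_B1: "n \<ge> 1 \<Longrightarrow> z \<ge> 0 \<Longrightarrow> gd (B1 (real n)) z \<ge> 1"
proof -
  assume a: "n \<ge> 1" "z \<ge> 0"
  have "(real n+1)*z \<ge> 0" "real n \<ge> 1" using a by auto
  moreover have "gd (B1 (real n)) z = (real n+1)*z + real n" by (simp add: B1_def)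
  ultimately show ?thesis using a by linarith
qed
lemma gd_B1_2: "n \<ge> 2 \<Longrightarrow> z \<ge> 0 \<Longrightarrow> gd (B1 (real n)) z \<ge> 2"
proof -
  assume a: "n \<ge> 2" "z \<ge> 0"
  have "(real n+1)*z \<ge> 0" "real n \<ge> 1" using a by auto
  moreover have "gd (B1 (real n)) z = (real n+1)*z + real n" by (simp add: B1_def)
  ultimately show ?thesis using a by linarith
qed
lemma gd_B2: "n \<ge> 1 \<Longrightarrow> z \<ge> 0 \<Longrightarrow> gd (B2 (real n)) z \<ge> 2"
proof -
  assume a: "n \<ge> 1" "z \<ge> 0"
  have "real n*z \<ge> 0" "real n \<ge> 1" using a by auto
  moreover have "gd (B2 (real n)) z = real n*z + (real n + 1)" by (simp add: B2_def)
  ultimately show ?thesis using a by linarith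
qed

lemma gd_Bx:
  assumes "0 \<le> x" "x < 1" "z \<ge> 0"
  shows "gd (Bx x) z \<ge> (if x > 1/3 then 2 else 1)"
proof (cases "x > 1/3")
  case False
  then show ?thesis using T_small[of x] assms gd_B1[of 1 z] by simp
next
  case True
  note kb = kx_bounds[OF assms(1,2)]
  show ?thesis
  proof (cases "kx x \<ge> 2")
    case True
    then show ?thesis using decomp(4)[OF assms(1,2)] gd_B1_2[OF True assms(3)] gd_B2[of "kx x" z] assms kb
      by auto
  next
    case False
    then have k: "kx x = 1" using kb by simp
    then have "Bx x = B2 1" using \<open>x > 1/3\<close> by (simp add: Bx_def)
    then show ?thesis using gd_B2[of 1 z] assms True by simp
  qed
qed


lemma gd_mmul: "gd N y \<noteq> 0 \<Longrightarrow> gd (mmul M N) y = gd M (mob N y) * gd N y"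
  by (cases M; cases N) (simp add: field_simps)

lemma mob_mmul: "gd N y \<noteq> 0 \<Longrightarrow> gd M (mob N y) \<noteq> 0 \<Longrightarrow> mob (mmul M N) y = mob M (mob N y)"
proof (cases M; cases N)
  fix a b c d a' b' c' d'
  assume M: "M = (a,b,c,d)" and N: "N = (a',b',c',d')" and h: "gd N y \<noteq> 0" "gd M (mob N y) \<noteq> 0"
  define p where "p = a'*y+b'"
  define q where "q = c'*y+d'"
  have hq: "q \<noteq> 0" using h M N q_def by simp
  have n1: "a*(p/q)+b = (a*p+b*q)/q" using hq by (simp add: field_simps)
  have n2: "c*(p/q)+d = (c*p+d*q)/q" using hq by (simp add: field_simps)
  have "mob M (mob N y) = ((a*p+b*q)/q)/((c*p+d*q)/q)" using M N n1 n2 p_def q_def by simp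
  also have "\<dots> = (a*p+b*q)/(c*p+d*q)" using hq by simp
  also have "\<dots> = mob (mmul M N) y" using M N p_def q_def by (simp add: algebra_simps)
  finally show ?thesis by simp
qed

lemma mdet_mmul: "mdet (mmul M N) = mdet M * mdet N"
  by (cases M; cases N) (simp add: algebra_simps)

lemma mob_diff: "gd M y \<noteq> 0 \<Longrightarrow> gd M z \<noteq> 0 \<Longrightarrow>
    mob M y - mob M z = mdet M * (y - z) / (gd M y * gd M z)"
proof (cases M)
  fix a b c d assume M: "M = (a,b,c,d)" and h: "gd M y \<noteq> 0" "gd M z \<noteq> 0"
  have h1: "c*y+d \<noteq> 0" "c*z+d \<noteq> 0" using h M by auto
  have "(a*y+b)/(c*y+d) - (a*z+b)/(c*z+d) = ((a*y+b)*(c*z+d) - (a*z+b)*(c*y+d))/((c*y+d)*(c*z+d))"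
    using h1 by (simp add: diff_frac_eq)
  also have "(a*y+b)*(c*z+d) - (a*z+b)*(c*y+d) = (a*d-b*c)*(y-z)" by (simp add: algebra_simps)
  finally show ?thesis using M by simp
qed

lemma mob_deriv: "gd M y \<noteq> 0 \<Longrightarrow> (mob M has_real_derivative mdet M / (gd M y)^2) (at y)"
proof (cases M)
  fix a b c d assume M: "M = (a,b,c,d)" and h: "gd M y \<noteq> 0"
  have h1: "c*y+d \<noteq> 0" using h M by simp
  have "((\<lambda>y. (a*y+b)/(c*y+d)) has_real_derivative ((a*(c*y+d) - (a*y+b)*c)/(c*y+d)^2)) (at y)"
    using h1 by (auto intro!: derivative_eq_intros simp: power2_eq_square)
  moreover have "(a*(c*y+d) - (a*y+b)*c)/(c*y+d)^2 = mdet M / (gd M y)^2"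
    using M by (simp add: algebra_simps)
  moreover have "mob M = (\<lambda>y. (a*y+b)/(c*y+d))" using M by (simp add: fun_eq_iff)
  ultimately show ?thesis by simp
qed

fun goodM :: "real\<times>real\<times>real\<times>real \<Rightarrow> bool" where
  "goodM (a,b,c,d) = (0 \<le> a \<and> 0 \<le> b \<and> 0 \<le> c \<and> 0 < d \<and> (a*d-b*c = 1 \<or> a*d-b*c = -1))"

lemma goodM_mmul: "goodM M \<Longrightarrow> goodM N \<Longrightarrow> goodM (mmul M N)"
proof (cases M; cases N)
  fix a b c d a' b' c' d'
  assume M: "M = (a,b,c,d)" and N: "N = (a',b',c',d')" and g: "goodM M" "goodM N"
  have e: "(a*a'+b*c')*(c*b'+d*d') - (a*b'+b*d')*(c*a'+d*c') = (a*d-b*c)*(a'*d'-b'*c')"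
    by (simp add: algebra_simps)
  have "c*b' \<ge> 0" "d*d' > 0" using g M N by auto
  then have "c*b'+d*d' > 0" by simp
  then show ?thesis using g M N e by auto
qed

lemma goodM_det: "goodM M \<Longrightarrow> mdet M = 1 \<or> mdet M = -1"
  by (cases M) auto

lemma goodM_gd: "goodM M \<Longrightarrow> y \<ge> 0 \<Longrightarrow> gd M y \<ge> gd M 0 \<and> gd M 0 > 0"
  by (cases M) auto

lemma goodM_gd_mono: "goodM M \<Longrightarrow> y \<le> z \<Longrightarrow> gd M y \<le> gd M z"
  by (cases M) (auto intro: mult_left_mono)

lemma goodM_gd_third: "goodM M \<Longrightarrow> gd M 1 \<le> 3 * gd M (1/3)"
  by (cases M) auto

lemma goodM_B1: "n \<ge> 1 \<Longrightarrow> goodM (B1 (real n))"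
  by (simp add: B1_def algebra_simps)
lemma goodM_B2: "n \<ge> 1 \<Longrightarrow> goodM (B2 (real n))"
  by (simp add: B2_def algebra_simps)

inductive_set R :: "(real\<times>real\<times>real\<times>real) set" where
  R_id: "(1,0,0,1) \<in> R"
| R_1: "M \<in> R \<Longrightarrow> n \<ge> 1 \<Longrightarrow> mmul (B1 (real n)) M \<in> R"
| R_2: "M \<in> R \<Longrightarrow> n \<ge> 1 \<Longrightarrow> mmul (B2 (real n)) M \<in> R"

lemma mob_B_mmul:
  assumes "goodM M" "goodM B" "y \<ge> 0" "mob M y \<ge> 0"
  shows "mob (mmul B M) y = mob B (mob M y)" "gd (mmul B M) y = gd B (mob M y) * gd M y"
proof -
  have "gd M y > 0" using goodM_gd[OF assms(1,3)] by linarith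
  moreover have "gd B (mob M y) > 0" using goodM_gd[OF assms(2,4)] by linarith
  ultimately show "mob (mmul B M) y = mob B (mob M y)" "gd (mmul B M) y = gd B (mob M y) * gd M y"
    using mob_mmul gd_mmul by auto
qed

lemma R_good: "M \<in> R \<Longrightarrow> goodM M \<and> (\<forall>y\<in>{0..1}. mob M y \<in> {0..1})"
proof (induction rule: R.induct)
  case R_id
  then show ?case by simp
next
  case (R_1 M n)
  have g: "goodM (mmul (B1 (real n)) M)" using R_1 goodM_mmul goodM_B1 by blast
  have "mob (mmul (B1 (real n)) M) y \<in> {0..1}" if "y \<in> {0..1}" for y
  proof -
    have m: "mob M y \<in> {0..1}" using R_1 that by blast
    have "mob (mmul (B1 (real n)) M) y = mob (B1 (real n)) (mob M y)"
      using mob_B_mmul(1)[of M "B1 (real n)" y] R_1 goodM_B1 that m by auto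
    then show ?thesis using branch1[of n "mob M y"] m R_1 by auto
  qed
  then show ?case using g by blast
next
  case (R_2 M n)
  have g: "goodM (mmul (B2 (real n)) M)" using R_2 goodM_mmul goodM_B2 by blast
  have "mob (mmul (B2 (real n)) M) y \<in> {0..1}" if "y \<in> {0..1}" for y
  proof -
    have m: "mob M y \<in> {0..1}" using R_2 that by blast
    have "mob (mmul (B2 (real n)) M) y = mob (B2 (real n)) (mob M y)"
      using mob_B_mmul(1)[of M "B2 (real n)" y] R_2 goodM_B2 that m by auto
    then show ?thesis using branch2[of n "mob M y"] m R_2 by auto
  qed
  then show ?case using g by blast
qed

lemma R_inv:
  assumes A: "oocf_T -` A \<inter> {0..1} = A"
  shows "M \<in> R \<Longrightarrow> y \<in> {0..1} \<Longrightarrow> (mob M y \<in> A \<longleftrightarrow> y \<in> A)"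
proof (induction arbitrary: y rule: R.induct)
  case R_id
  then show ?case by simp
next
  case (R_1 M n)
  have m: "mob M y \<in> {0..1}" using R_1 R_good by blast
  have e: "mob (mmul (B1 (real n)) M) y = mob (B1 (real n)) (mob M y)"
    using mob_B_mmul(1)[of M "B1 (real n)" y] R_1 R_good goodM_B1 m by auto
  have "mob (B1 (real n)) (mob M y) \<in> A \<longleftrightarrow> mob M y \<in> A"
    using branch1[of n "mob M y"] m R_1 A by (auto; metis A IntE IntI atLeastAtMost_iff vimageE vimageI less_imp_le)
  then show ?case using e R_1 by simp
next
  case (R_2 M n)
  have m: "mob M y \<in> {0..1}" using R_2 R_good by blast
  have e: "mob (mmul (B2 (real n)) M) y = mob (B2 (real n)) (mob M y)"
    using mob_B_mmul(1)[of M "B2 (real n)" y] R_2 R_good goodM_B2 m by auto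
  have "mob (B2 (real n)) (mob M y) \<in> A \<longleftrightarrow> mob M y \<in> A"
    using branch2[of n "mob M y"] m R_2 A by (auto; metis A IntE IntI atLeastAtMost_iff vimageE vimageI less_imp_le)
  then show ?case using e R_2 by simp
qed


lemma orbit_range: "x \<in> {0..1} \<Longrightarrow> (oocf_T ^^ n) x \<in> {0..1}"
proof (induction n)
  case (Suc n) then show ?case using T_range[of "(oocf_T^^n) x"] by simp
qed simp

lemma funpow_T_Suc: "(oocf_T ^^ Suc n) x = (oocf_T ^^ n) (oocf_T x)"
  by (simp only: funpow_Suc_right comp_apply)

fun Mat :: "nat \<Rightarrow> real \<Rightarrow> real\<times>real\<times>real\<times>real" where
  "Mat 0 x = (1,0,0,1)"
| "Mat (Suc n) x = mmul (Bx x) (Mat n (oocf_T x))"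

fun cnt :: "nat \<Rightarrow> real \<Rightarrow> nat" where
  "cnt 0 x = 0"
| "cnt (Suc n) x = (if x > 1/3 then 1 else 0) + cnt n (oocf_T x)"

definition goodorb :: "real \<Rightarrow> bool" where
  "goodorb x \<longleftrightarrow> x \<in> {0..1} \<and> (\<forall>i. (oocf_T ^^ i) x \<notin> {0,1})"

lemma goodorb_T: "goodorb x \<Longrightarrow> goodorb (oocf_T x)"
  unfolding goodorb_def
proof (intro conjI allI)
  assume a: "x \<in> {0..1} \<and> (\<forall>i. (oocf_T ^^ i) x \<notin> {0, 1})"
  show "oocf_T x \<in> {0..1}" using a T_range by blast
  fix i have "(oocf_T ^^ Suc i) x \<notin> {0, 1}" using a by blast
  then show "(oocf_T ^^ i) (oocf_T x) \<notin> {0, 1}" unfolding funpow_T_Suc .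
qed

lemma goodorb_x: "goodorb x \<Longrightarrow> 0 < x \<and> x < 1"
proof -
  assume a: "goodorb x"
  then have "(oocf_T ^^ 0) x \<notin> {0,1}" "x \<in> {0..1}" unfolding goodorb_def by blast+
  then show ?thesis by auto
qed

lemma Mat_props:
  "goodorb x \<Longrightarrow> Mat n x \<in> R \<and> mob (Mat n x) ((oocf_T ^^ n) x) = x \<and>
      (\<forall>z\<in>{0..1}. gd (Mat n x) z \<ge> 2 ^ (cnt n x))"
proof (induction n arbitrary: x)
  case 0
  then show ?case by (auto intro: R_id)
next
  case (Suc n)
  define y where "y = oocf_T x"
  define M where "M = Mat n y"
  define B where "B = Bx x"
  have gy: "goodorb y" using goodorb_T Suc.prems y_def by blast
  have IH: "M \<in> R" "mob M ((oocf_T ^^ n) y) = y" "\<forall>z\<in>{0..1}. gd M z \<ge> 2 ^ (cnt n y)"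
    using Suc.IH[OF gy] M_def by auto
  have x01: "0 < x" "x < 1" using goodorb_x Suc.prems by auto
  note dc = decomp[of x]
  have kx1: "kx x \<ge> 1" using kx_bounds x01 by auto
  have BB: "B = B1 (real (kx x)) \<or> B = B2 (real (kx x))" using dc x01 B_def by auto
  have gB: "goodM B" using BB goodM_B1 goodM_B2 kx1 by auto
  have MR: "mmul B M \<in> R" using BB IH(1) kx1 R.R_1 R.R_2 by metis
  have gM: "goodM M" using IH(1) R_good by blast
  have t01: "(oocf_T ^^ n) y \<in> {0..1}" using orbit_range gy goodorb_def by blast
  have "mob (mmul B M) ((oocf_T ^^ n) y) = mob B (mob M ((oocf_T ^^ n) y))"
    using mob_B_mmul(1)[OF gM gB, of "(oocf_T^^n) y"] t01 IH(2) goodorb_x[OF gy] by simp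
  also have "\<dots> = x" using IH(2) dc x01 y_def B_def by simp
  finally have m: "mob (Mat (Suc n) x) ((oocf_T ^^ Suc n) x) = x"
    using funpow_T_Suc[of n x] y_def M_def B_def by simp
  have g: "gd (Mat (Suc n) x) z \<ge> 2 ^ (cnt (Suc n) x)" if z: "z \<in> {0..1}" for z
  proof -
    have mz: "mob M z \<in> {0..1}" using IH(1) R_good z by blast
    have e: "gd (mmul B M) z = gd B (mob M z) * gd M z"
      using mob_B_mmul(2)[OF gM gB] z mz by auto
    have g1: "gd B (mob M z) \<ge> (if x > 1/3 then 2 else 1)" using gd_Bx[of x "mob M z"] x01 mz B_def by auto
    have g2: "gd M z \<ge> 2 ^ (cnt n y)" using IH(3) z by blast
    have "(2::real) ^ (cnt (Suc n) x) = (if x > 1/3 then 2 else 1) * 2 ^ (cnt n y)"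
      using y_def by (simp add: power_add)
    also have "\<dots> \<le> gd B (mob M z) * gd M z"
      using g1 g2 by (intro mult_mono) (auto split: if_splits)
    finally show ?thesis using e M_def B_def y_def by simp
  qed
  show ?case using MR m g M_def B_def y_def by simp
qed

lemma small_orbit:
  assumes "0 < y" "\<forall>l\<le>m. (oocf_T ^^ l) y \<le> 1/3"
  shows "(oocf_T ^^ m) y > 0 \<and> 1/((oocf_T ^^ m) y) = 1/y - 2*m"
  using assms(2)
proof (induction m)
  case 0
  then show ?case using assms by simp
next
  case (Suc m)
  define u where "u = (oocf_T ^^ m) y"
  have IH: "u > 0" "1/u = 1/y - 2*m" using Suc u_def by auto
  have u3: "u \<le> 1/3" using Suc.prems u_def by auto
  have Tu: "oocf_T u = u/(1-2*u)" using T_small[of u] IH u3 by simp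
  have d: "1 - 2*u > 0" using u3 by simp
  have "(oocf_T ^^ Suc m) y = u/(1-2*u)" using Tu u_def by simp
  moreover have "u/(1-2*u) > 0" using d IH by simp
  moreover have "1/(u/(1-2*u)) = 1/u - 2" using d IH by (simp add: field_simps)
  ultimately show ?case using IH by simp
qed

lemma io:
  assumes "goodorb x"
  shows "\<exists>j\<ge>i. (oocf_T ^^ j) x > 1/3"
proof (rule ccontr)
  assume "\<not> ?thesis"
  then have h: "\<forall>j\<ge>i. (oocf_T ^^ j) x \<le> 1/3" by auto
  define y where "y = (oocf_T ^^ i) x"
  have gy: "y > 0" using assms y_def unfolding goodorb_def
    by (metis atLeastAtMost_iff insertCI less_eq_real_def orbit_range)
  have hy: "\<forall>l. (oocf_T ^^ l) y \<le> 1/3"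
    using h y_def by (metis funpow_add comp_apply le_add2)
  define m where "m = nat \<lceil>1/y\<rceil>"
  have so: "(oocf_T ^^ m) y > 0 \<and> 1/((oocf_T ^^ m) y) = 1/y - 2*m"
    using small_orbit[of y m] gy hy by blast
  have "1/((oocf_T ^^ m) y) \<ge> 3"
    using so hy[rule_format, of m] by (simp add: field_simps)
  moreover have "real m \<ge> 1/y" using m_def by linarith
  moreover have "1/y > 0" using gy by simp
  ultimately show False using so by linarith
qed

lemma cnt_right: "cnt (Suc n) x = cnt n x + (if (oocf_T ^^ n) x > 1/3 then 1 else 0)"
proof (induction n arbitrary: x)
  case 0
  then show ?case by simp
next
  case (Suc n)
  show ?case using Suc.IH[of "oocf_T x"] funpow_T_Suc[of n x] by simp
qed

lemma cnt_mono: "m \<le> n \<Longrightarrow> cnt m x \<le> cnt n x"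
proof (induction n rule: dec_induct)
  case base then show ?case by simp
next
  case (step n) then show ?case using cnt_right[of n x] by simp
qed

lemma big:
  assumes "goodorb x"
  shows "\<exists>j. cnt j x \<ge> N \<and> (oocf_T ^^ j) x > 1/3"
proof (induction N)
  case 0
  then show ?case using io[OF assms, of 0] by auto
next
  case (Suc N)
  then obtain j where j: "cnt j x \<ge> N" "(oocf_T ^^ j) x > 1/3" by auto
  then have c: "cnt (Suc j) x \<ge> Suc N" using cnt_right[of j x] by simp
  obtain j' where j': "j' \<ge> Suc j" "(oocf_T ^^ j') x > 1/3" using io[OF assms, of "Suc j"] by auto
  then show ?case using c cnt_mono[OF j'(1), of x] by (intro exI[of _ j']) auto
qed


lemma subst_inc:
  fixes f :: "real \<Rightarrow> ennreal"
  assumes Mf: "f \<in> borel_measurable borel"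
  assumes derivg: "\<And>x. x \<in> {a..b} \<Longrightarrow> (g has_real_derivative g' x) (at x)"
  assumes contg': "continuous_on {a..b} g'"
  assumes nn: "\<And>x. x \<in> {a..b} \<Longrightarrow> g' x \<ge> 0"
  assumes "a < b"
  shows "(\<integral>\<^sup>+x. f x * indicator {g a..g b} x \<partial>lborel) =
             (\<integral>\<^sup>+x. f (g x) * ennreal (g' x) * indicator {a..b} x \<partial>lborel)"
  using nn_integral_substitution_aux[OF Mf _ derivg contg' nn assms(5)] by simp

lemma subst_dec:
  fixes f :: "real \<Rightarrow> ennreal"
  assumes Mf: "f \<in> borel_measurable borel"
  assumes derivg: "\<And>x. x \<in> {a..b} \<Longrightarrow> (g has_real_derivative g' x) (at x)"
  assumes contg': "continuous_on {a..b} g'"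
  assumes np: "\<And>x. x \<in> {a..b} \<Longrightarrow> g' x \<le> 0"
  assumes ab: "a < b"
  assumes Mg: "g \<in> borel_measurable borel" and Mg': "g' \<in> borel_measurable borel"
  shows "(\<integral>\<^sup>+x. f x * indicator {g b..g a} x \<partial>lborel) =
             (\<integral>\<^sup>+x. f (g x) * ennreal (- g' x) * indicator {a..b} x \<partial>lborel)"
proof -
  define h where "h x = g (-x)" for x
  define h' where "h' x = - g' (-x)" for x
  have dh: "(h has_real_derivative h' x) (at x)" if "x \<in> {-b..-a}" for x
  proof -
    have "(g has_real_derivative g' (-x)) (at (-x))" using derivg that by auto
    then have "((\<lambda>x. g (-x)) has_real_derivative g' (-x) * (-1)) (at x)"
      by (rule DERIV_chain2) (auto intro!: derivative_eq_intros)
    then show ?thesis unfolding h_def h'_def by simp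
  qed
  have ch: "continuous_on {-b..-a} h'"
  proof -
    have im: "uminus ` {-b..-a} \<subseteq> {a..b}" by auto
    have "continuous_on {-b..-a} (g' \<circ> uminus)"
      by (rule continuous_on_compose[OF continuous_on_minus[OF continuous_on_id] continuous_on_subset[OF contg' im]])
    then have "continuous_on {-b..-a} (\<lambda>x. - (g' \<circ> uminus) x)" by (rule continuous_on_minus)
    then show ?thesis unfolding h'_def o_def by simp
  qed
  have [measurable]: "h \<in> borel_measurable borel" unfolding h_def using Mg by measurable
  have [measurable]: "h' \<in> borel_measurable borel" unfolding h'_def using Mg' by measurable
  note Mf[measurable]
  have nnh: "h' x \<ge> 0" if "x \<in> {-b..-a}" for x using np that unfolding h'_def by auto
  have "(\<integral>\<^sup>+x. f x * indicator {h (-b)..h (-a)} x \<partial>lborel) =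
        (\<integral>\<^sup>+x. f (h x) * ennreal (h' x) * indicator {-b..-a} x \<partial>lborel)"
    using subst_inc[OF Mf dh ch nnh] ab by simp
  also have "\<dots> = (\<integral>\<^sup>+x. f (h (0 + (-1) * x)) * ennreal (h' (0 + (-1) * x)) * indicator {-b..-a} (0 + (-1) * x) \<partial>lborel)"
    by (subst nn_integral_real_affine[where c="-1" and t=0]) auto
  also have "\<dots> = (\<integral>\<^sup>+x. f (g x) * ennreal (- g' x) * indicator {a..b} x \<partial>lborel)"
    unfolding h_def h'_def by (intro nn_integral_cong) (auto simp: indicator_def)
  finally show ?thesis unfolding h_def by simp
qed

lemma goodM_cases: "goodM M \<Longrightarrow> (\<exists>a b c d. M = (a,b,c,d) \<and> 0 \<le> c \<and> 0 < d)"
  by (cases M) auto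

lemma gd_cont: "continuous_on S (\<lambda>y. k / (gd M y)^2)" if "\<And>y. y \<in> S \<Longrightarrow> gd M y \<noteq> 0"
proof (cases M)
  fix a b c d assume M: "M = (a,b,c,d)"
  have "continuous_on S (\<lambda>y. k / (c*y+d)^2)"
    using that M by (intro continuous_intros) auto
  then show ?thesis using M by simp
qed

lemma mob_meas: "mob M \<in> borel_measurable borel"
proof (cases M)
  fix a b c d assume M: "M = (a,b,c,d)"
  have "mob M = (\<lambda>y. (a*y+b)/(c*y+d))" using M by (simp add: fun_eq_iff)
  moreover have "(\<lambda>y::real. (a*y+b)/(c*y+d)) \<in> borel_measurable borel" by measurable
  ultimately show ?thesis by simp
qed

lemma mobd_meas: "(\<lambda>y. k / (gd M y)^2) \<in> borel_measurable borel"
proof (cases M)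
  fix a b c d assume M: "M = (a,b,c,d)"
  have "(\<lambda>y. k / (gd M y)^2) = (\<lambda>y. k/(c*y+d)^2)" using M by (simp add: fun_eq_iff)
  moreover have "(\<lambda>y::real. k/(c*y+d)^2) \<in> borel_measurable borel" by measurable
  ultimately show ?thesis by simp
qed

lemma mob_subst:
  fixes f :: "real \<Rightarrow> ennreal"
  assumes g: "goodM M" and a: "0 \<le> a" "a < b" and Mf: "f \<in> borel_measurable borel"
  shows "(\<integral>\<^sup>+z. f z * indicator {min (mob M a) (mob M b)..max (mob M a) (mob M b)} z \<partial>lborel) =
         (\<integral>\<^sup>+y. f (mob M y) * ennreal (1 / (gd M y)^2) * indicator {a..b} y \<partial>lborel)"
proof -
  have gp: "gd M y > 0" if "y \<ge> 0" for y using goodM_gd[OF g that] by linarith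
  have der: "(mob M has_real_derivative mdet M / (gd M y)^2) (at y)" if "y \<in> {a..b}" for y
    using mob_deriv gp that a by (metis atLeastAtMost_iff less_irrefl order_trans)
  have cont: "continuous_on {a..b} (\<lambda>y. mdet M / (gd M y)^2)"
    using gp a by (intro gd_cont) (metis atLeastAtMost_iff less_irrefl order_trans)
  have diff: "mob M b - mob M a = mdet M * (b - a) / (gd M b * gd M a)"
    using mob_diff gp a by (metis less_irrefl order_trans less_imp_le)
  have gab: "gd M b * gd M a > 0" using gp a by simp
  consider "mdet M = 1" | "mdet M = -1" using goodM_det[OF g] by blast
  then show ?thesis
  proof cases
    case 1
    have le: "mob M a \<le> mob M b" using diff 1 gab a by (simp add: field_simps)
    show ?thesis using subst_inc[OF Mf der cont _ a(2)] 1 le by simp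
  next
    case 2
    have le: "mob M b \<le> mob M a" using diff 2 gab a by (simp add: field_simps)
    have mm: "min (mob M a) (mob M b) = mob M b" "max (mob M a) (mob M b) = mob M a" using le by auto
    show ?thesis unfolding mm using subst_dec[OF Mf der cont _ a(2) mob_meas mobd_meas] 2 by simp
  qed
qed

lemma dens_lemma:
  assumes g: "goodM M" and a: "0 \<le> a" "a < b" and X: "X \<in> sets borel"
    and inv: "\<And>y. y \<in> {a..b} \<Longrightarrow> (mob M y \<in> X \<longleftrightarrow> y \<in> X)"
  shows "emeasure lborel (X \<inter> {min (mob M a) (mob M b)..max (mob M a) (mob M b)}) \<ge>
         ennreal (1 / (gd M b)^2) * emeasure lborel (X \<inter> {a..b})"
proof -
  let ?I = "{min (mob M a) (mob M b)..max (mob M a) (mob M b)}"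
  have gp: "gd M y > 0" if "y \<ge> 0" for y using goodM_gd[OF g that] by linarith
  have "emeasure lborel (X \<inter> ?I) = (\<integral>\<^sup>+z. indicator (X \<inter> ?I) z \<partial>lborel)"
    using X by simp
  also have "\<dots> = (\<integral>\<^sup>+z. indicator X z * indicator ?I z \<partial>lborel)"
    by (intro nn_integral_cong) (auto simp: indicator_def)
  also have "\<dots> = (\<integral>\<^sup>+y. indicator X (mob M y) * ennreal (1 / (gd M y)^2) * indicator {a..b} y \<partial>lborel)"
    by (rule mob_subst[OF g a]) (use X in simp)
  also have "\<dots> \<ge> (\<integral>\<^sup>+y. ennreal (1 / (gd M b)^2) * indicator (X \<inter> {a..b}) y \<partial>lborel)"
  proof (intro nn_integral_mono)
    fix y
    show "ennreal (1 / (gd M b)^2) * indicator (X \<inter> {a..b}) y \<le> indicator X (mob M y) * ennreal (1 / (gd M y)^2) * indicator {a..b} y"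
    proof (cases "y \<in> {a..b}")
      case True
      have y0: "y \<ge> 0" using True a by auto
      have "gd M y \<le> gd M b" using goodM_gd_mono[OF g] True by auto
      moreover have "gd M y > 0" using gp y0 by blast
      moreover have "gd M b > 0" using gp a by auto
      ultimately have "(gd M y)^2 \<le> (gd M b)^2" "gd M y > 0" "gd M b > 0" by (auto intro: power_mono)
      then have "1 / (gd M b)^2 \<le> 1 / (gd M y)^2" by (intro divide_left_mono) auto
      then show ?thesis using True inv[OF True] by (auto simp: indicator_def intro: ennreal_leI)
    qed (auto simp: indicator_def)
  qed
  also have "(\<integral>\<^sup>+y. ennreal (1 / (gd M b)^2) * indicator (X \<inter> {a..b}) y \<partial>lborel) =
      ennreal (1 / (gd M b)^2) * emeasure lborel (X \<inter> {a..b})"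
    using X by (subst nn_integral_cmult_indicator) auto
  finally show ?thesis .
qed


lemma space_nu[simp]: "space nu = {0..1}"
  by (simp add: nu_def space_restrict_space)

lemma sets_nu_iff: "A \<in> sets nu \<longleftrightarrow> A \<subseteq> {0..1} \<and> A \<in> sets borel"
  using sets_restrict_space_iff[of "{0..1::real}" lborel A] by (simp add: nu_def)

lemma emeasure_nu:
  assumes A: "A \<in> sets nu"
  shows "emeasure nu A = (\<integral>\<^sup>+x. ennreal (1/x) * indicator A x \<partial>lborel)"
proof -
  have A': "A \<subseteq> {0..1}" "A \<in> sets borel" using A sets_nu_iff by auto
  have As: "A \<in> sets (restrict_space lborel {0..1})" using A by (simp add: nu_def)
  have m: "(\<lambda>x. ennreal (1/x)) \<in> borel_measurable (restrict_space lborel {0..1})"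
    by (intro measurable_restrict_space1) measurable
  have "emeasure nu A = (\<integral>\<^sup>+x. ennreal (1/x) * indicator A x \<partial>(restrict_space lborel {0..1}))"
    unfolding nu_def by (rule emeasure_density[OF m As])
  also have "\<dots> = (\<integral>\<^sup>+x. ennreal (1/x) * indicator A x * indicator {0..1} x \<partial>lborel)"
    by (subst nn_integral_restrict_space) auto
  also have "\<dots> = (\<integral>\<^sup>+x. ennreal (1/x) * indicator A x \<partial>lborel)"
    using A' by (intro nn_integral_cong) (auto simp: indicator_def)
  finally show ?thesis .
qed

lemma T_meas[measurable]: "oocf_T \<in> borel_measurable borel"
  unfolding oocf_T_def Let_def by measurable

lemma T_meas_nu: "oocf_T \<in> nu \<rightarrow>\<^sub>M nu"
proof -
  have P: "oocf_T \<in> space (restrict_space lborel {0..1}) \<rightarrow> {0..1::real}"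
  proof (rule Pi_I)
    fix x :: real assume "x \<in> space (restrict_space lborel {0..1})"
    then have "x \<in> {0..1}" by (simp add: space_restrict_space)
    then show "oocf_T x \<in> {0..1}" by (rule T_range)
  qed
  have m1: "oocf_T \<in> lborel \<rightarrow>\<^sub>M lborel" using T_meas by simp
  have m2: "oocf_T \<in> restrict_space lborel {0..1} \<rightarrow>\<^sub>M lborel" by (rule measurable_restrict_space1[OF m1])
  have "oocf_T \<in> restrict_space lborel {0..1} \<rightarrow>\<^sub>M restrict_space lborel {0..1}"
    by (rule measurable_restrict_space2[OF P m2])
  moreover have "measurable nu nu = measurable (restrict_space lborel {0..1}) (restrict_space lborel {0..1::real})"
    unfolding nu_def by (rule measurable_cong_sets) simp_all
  ultimately show ?thesis by simp
qed

definition D1 :: "nat \<Rightarrow> real set" where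
  "D1 n = {real n/(real n+1) ..< (2*real n+1)/(2*real n+3)}"
definition D2 :: "nat \<Rightarrow> real set" where
  "D2 n = {(2*real n+1)/(2*real n+3) ..< (real n+1)/(real n+2)}"

lemma D_sub: "D1 n \<subseteq> {0..<1}" "D2 n \<subseteq> {0..<1}"
  by (auto simp: D1_def D2_def field_simps)

lemma D_disj: "D1 n \<inter> D2 n = {}"
  by (auto simp: D1_def D2_def)

lemma D_kx:
  assumes z: "0 \<le> z" "z < 1"
  shows "(z \<in> D1 n \<or> z \<in> D2 n) \<longleftrightarrow> kx z = Suc n"
proof -
  have p: "1 - z > 0" using z by simp
  have u: "D1 n \<union> D2 n = {real n/(real n+1) ..< (real n+1)/(real n+2)}"
  proof -
    have "real n/(real n+1) \<le> (2*real n+1)/(2*real n+3)" by (simp add: field_simps)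
    moreover have "(2*real n+1)/(2*real n+3) \<le> (real n+1)/(real n+2)" by (simp add: field_simps)
    ultimately show ?thesis unfolding D1_def D2_def by auto
  qed
  have "kx z = Suc n \<longleftrightarrow> \<lfloor>1/(1-z)\<rfloor> = int (Suc n)"
    unfolding kx_def using p by (auto simp: nat_eq_iff)
  also have "\<dots> \<longleftrightarrow> 1 + real n \<le> 1/(1-z) \<and> 1/(1-z) < 2 + real n"
    by (simp add: floor_eq_iff)
  also have "\<dots> \<longleftrightarrow> real n/(real n+1) \<le> z \<and> z < (real n+1)/(real n+2)"
    using p by (simp add: field_simps)
  finally show ?thesis using u by (metis Un_iff atLeastLessThan_iff)
qed

lemma D_sum:
  fixes F :: "real \<Rightarrow> ennreal"
  shows "(\<Sum>n. F z * indicator (D1 n) z + F z * indicator (D2 n) z) = F z * indicator {0..<1} z"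
proof (cases "z \<in> {0..<1}")
  case False
  then have "z \<notin> D1 n" "z \<notin> D2 n" for n using D_sub by blast+
  then show ?thesis using False by simp
next
  case True
  define n0 where "n0 = kx z - 1"
  have k1: "kx z \<ge> 1" using kx_bounds True by auto
  have kz: "kx z = Suc n0" using k1 n0_def by simp
  have "(\<Sum>n. F z * indicator (D1 n) z + F z * indicator (D2 n) z) =
        (\<Sum>n\<in>{n0}. F z * indicator (D1 n) z + F z * indicator (D2 n) z)"
  proof (rule suminf_finite)
    fix n assume "n \<notin> {n0}"
    then have "kx z \<noteq> Suc n" using kz by simp
    then have "z \<notin> D1 n" "z \<notin> D2 n" using D_kx True by auto
    then show "F z * indicator (D1 n) z + F z * indicator (D2 n) z = 0" by simp
  qed simp
  also have "\<dots> = F z"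
    using D_kx[of z n0] True kz D_disj[of n0] by (auto simp: indicator_def)
  finally show ?thesis using True by simp
qed

definition h1 :: "nat \<Rightarrow> real \<Rightarrow> real" where
  "h1 n y = 1 / (mob (B1 (real (Suc n))) y * (gd (B1 (real (Suc n))) y)^2)"
definition h2 :: "nat \<Rightarrow> real \<Rightarrow> real" where
  "h2 n y = 1 / (mob (B2 (real (Suc n))) y * (gd (B2 (real (Suc n))) y)^2)"

lemma h1_props:
  assumes y: "0 < y"
  shows "h1 n y = (inverse (y + (y+1) * real n) - inverse (y + (y+1) * real (Suc n))) / (y+1) \<and> h1 n y \<ge> 0"
proof -
  define a where "a = y + real n * y + real n"
  define g where "g = 2 * y + real n * y + real n + 1"
  have pa: "a > 0" unfolding a_def using y by (intro add_pos_nonneg) auto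
  have pg: "g > 0" unfolding g_def using y by (intro add_pos_nonneg) auto
  have ha: "mob (B1 (real (Suc n))) y = a/g" "gd (B1 (real (Suc n))) y = g"
    by (simp_all add: B1_def a_def g_def algebra_simps)
  have "(a/g)*g^2 = a*g" using pg by (simp add: power2_eq_square)
  then have h: "h1 n y = 1/(a*g)" unfolding h1_def ha by simp
  have uu: "inverse (y + (y+1) * real n) = 1/a" "inverse (y + (y+1) * real (Suc n)) = 1/g" unfolding a_def g_def
    by (simp_all add: inverse_eq_divide algebra_simps)
  have "1/a - 1/g = (g - a)/(a*g)" using pa pg by (simp add: diff_frac_eq)
  moreover have "g - a = y + 1" by (simp add: a_def g_def)
  ultimately have "(inverse (y + (y+1) * real n) - inverse (y + (y+1) * real (Suc n)))/(y+1) = 1/(a*g)" unfolding uu using y by simp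
  then show ?thesis using h pa pg by simp
qed

lemma h2_props:
  assumes y: "0 < y"
  shows "h2 n y = (inverse (1 + (y+1) * real n) - inverse (1 + (y+1) * real (Suc n))) / (y+1) \<and> h2 n y \<ge> 0"
proof -
  define a where "a = real n * y + real n + 1"
  define g where "g = real n * y + y + real n + 2"
  have pa: "a > 0" unfolding a_def using y by (intro add_nonneg_pos) auto
  have pg: "g > 0" unfolding g_def using y by (intro add_nonneg_pos) auto
  have ha: "mob (B2 (real (Suc n))) y = a/g" "gd (B2 (real (Suc n))) y = g"
    by (simp_all add: B2_def a_def g_def algebra_simps)
  have "(a/g)*g^2 = a*g" using pg by (simp add: power2_eq_square)
  then have h: "h2 n y = 1/(a*g)" unfolding h2_def ha by simp
  have uu: "inverse (1 + (y+1) * real n) = 1/a" "inverse (1 + (y+1) * real (Suc n)) = 1/g" unfolding a_def g_def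
    by (simp_all add: inverse_eq_divide algebra_simps)
  have "1/a - 1/g = (g - a)/(a*g)" using pa pg by (simp add: diff_frac_eq)
  moreover have "g - a = y + 1" by (simp add: a_def g_def)
  ultimately have "(inverse (1 + (y+1) * real n) - inverse (1 + (y+1) * real (Suc n)))/(y+1) = 1/(a*g)" unfolding uu using y by simp
  then show ?thesis using h pa pg by simp
qed

lemma h_series:
  assumes y: "0 < y"
  shows "(\<lambda>n. h1 n y + h2 n y) sums (1/y)"
proof -
  define u where "u n = inverse (y + (y+1) * real n)" for n
  define v where "v n = inverse (1 + (y+1) * real n)" for n
  have fu: "filterlim (\<lambda>n. y + (y+1) * real n) at_top sequentially"
    by (intro filterlim_tendsto_add_at_top[OF tendsto_const] filterlim_tendsto_pos_mult_at_top[OF tendsto_const] filterlim_real_sequentially) (use y in auto)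
  have fv: "filterlim (\<lambda>n. 1 + (y+1) * real n) at_top sequentially"
    by (intro filterlim_tendsto_add_at_top[OF tendsto_const] filterlim_tendsto_pos_mult_at_top[OF tendsto_const] filterlim_real_sequentially) (use y in auto)
  have u0: "u \<longlonglongrightarrow> 0" unfolding u_def by (rule tendsto_inverse_0_at_top[OF fu])
  have v0: "v \<longlonglongrightarrow> 0" unfolding v_def by (rule tendsto_inverse_0_at_top[OF fv])
  have e1: "h1 n y = (u n - u (Suc n)) / (y+1)" for n using h1_props[OF y] unfolding u_def by blast
  have e2: "h2 n y = (v n - v (Suc n)) / (y+1)" for n using h2_props[OF y] unfolding v_def by blast
  have s: "(\<lambda>n. (u n - u (Suc n)) + (v n - v (Suc n))) sums ((u 0 - 0) + (v 0 - 0))"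
    by (intro sums_add telescope_sums' u0 v0)
  have "(\<lambda>n. ((u n - u (Suc n)) + (v n - v (Suc n))) / (y+1)) sums (((u 0 - 0) + (v 0 - 0))/(y+1))"
    by (rule sums_divide[OF s])
  moreover have "((u 0 - 0) + (v 0 - 0))/(y+1) = 1/y"
  proof -
    have "y + y*y > 0" using y by (simp add: add_pos_pos)
    then show ?thesis using y unfolding u_def v_def by (simp add: field_simps)
  qed
  moreover have "(\<lambda>n. h1 n y + h2 n y) = (\<lambda>n. ((u n - u (Suc n)) + (v n - v (Suc n))) / (y+1))"
    by (rule ext) (simp only: e1 e2 add_divide_distrib)
  ultimately show "(\<lambda>n. h1 n y + h2 n y) sums (1/y)" by simp
qed


lemma D1_borel[measurable]: "D1 n \<in> sets borel" by (simp add: D1_def)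
lemma D2_borel[measurable]: "D2 n \<in> sets borel" by (simp add: D2_def)

lemma mob_B1_D:
  assumes y: "0 < y" "y < 1"
  shows "mob (B1 (real (Suc n))) y \<in> D1 n"
proof -
  have p: "(real n+2)*y + (real n+1) > 0" using y by (intro add_nonneg_pos) auto
  have e: "mob (B1 (real (Suc n))) y = ((real n+1)*y + real n)/((real n+2)*y + (real n+1))"
    by (simp add: B1_def algebra_simps)
  have l: "real n/(real n+1) \<le> ((real n+1)*y + real n)/((real n+2)*y + (real n+1))"
    using p y by (simp add: field_simps)
  have "(2*real n+3)*((real n+1)*y + real n) < (2*real n+1)*((real n+2)*y + (real n+1))"
    using y by (simp add: algebra_simps)
  then have u: "((real n+1)*y + real n)/((real n+2)*y + (real n+1)) < (2*real n+1)/(2*real n+3)"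
    using p by (simp add: field_simps)
  show ?thesis using e l u by (simp add: D1_def)
qed

lemma mob_B2_D:
  assumes y: "0 < y" "y < 1"
  shows "mob (B2 (real (Suc n))) y \<in> D2 n"
proof -
  have p: "(real n+1)*y + (real n+2) > 0" using y by (intro add_nonneg_pos) auto
  have e: "mob (B2 (real (Suc n))) y = (real n*y + (real n+1))/((real n+1)*y + (real n+2))"
    by (simp add: B2_def algebra_simps)
  have "(2*real n+1)*((real n+1)*y + (real n+2)) \<le> (2*real n+3)*(real n*y + (real n+1))"
    using y by (simp add: algebra_simps)
  then have l: "(2*real n+1)/(2*real n+3) \<le> (real n*y + (real n+1))/((real n+1)*y + (real n+2))"
    using p by (simp add: field_simps)
  have "(real n+2)*(real n*y + (real n+1)) < (real n+1)*((real n+1)*y + (real n+2))"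
    using y by (simp add: algebra_simps)
  then have u: "(real n*y + (real n+1))/((real n+1)*y + (real n+2)) < (real n+1)/(real n+2)"
    using p by (simp add: field_simps)
  show ?thesis using e l u by (simp add: D2_def)
qed

lemma D1_I: "D1 n \<subseteq> {min (mob (B1 (real (Suc n))) 0) (mob (B1 (real (Suc n))) 1) ..
                         max (mob (B1 (real (Suc n))) 0) (mob (B1 (real (Suc n))) 1)}"
proof -
  have "mob (B1 (real (Suc n))) 0 = real n/(real n+1)" by (simp add: B1_def)
  moreover have "mob (B1 (real (Suc n))) 1 = (2*real n+1)/(2*real n+3)" by (simp add: B1_def algebra_simps)
  ultimately show ?thesis unfolding D1_def by auto
qed

lemma D2_I: "D2 n \<subseteq> {min (mob (B2 (real (Suc n))) 0) (mob (B2 (real (Suc n))) 1) ..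
                         max (mob (B2 (real (Suc n))) 0) (mob (B2 (real (Suc n))) 1)}"
proof -
  have "mob (B2 (real (Suc n))) 0 = (real n+1)/(real n+2)" by (simp add: B2_def algebra_simps)
  moreover have "mob (B2 (real (Suc n))) 1 = (2*real n+1)/(2*real n+3)" by (simp add: B2_def algebra_simps)
  ultimately show ?thesis unfolding D2_def by auto
qed

lemma AE_01: "AE y in lborel. y \<noteq> 0 \<and> y \<noteq> (1::real)"
  using AE_lborel_singleton[of 0] AE_lborel_singleton[of 1] by eventually_elim auto

lemma sub_gen:
  fixes A :: "real set" and M and D and h :: "real \<Rightarrow> real"
  assumes A[measurable]: "A \<in> sets borel" and D[measurable]: "D \<in> sets borel"
    and g: "goodM M"
    and DI: "D \<subseteq> {min (mob M 0) (mob M 1) .. max (mob M 0) (mob M 1)}"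
    and inD: "\<And>y. 0 < y \<Longrightarrow> y < 1 \<Longrightarrow> mob M y \<in> D"
    and Tm: "\<And>y. 0 < y \<Longrightarrow> y < 1 \<Longrightarrow> oocf_T (mob M y) = y"
    and h: "\<And>y. 0 < y \<Longrightarrow> y < 1 \<Longrightarrow> h y = 1 / (mob M y * (gd M y)^2)"
  shows "(\<integral>\<^sup>+z. ennreal (1/z) * indicator A (oocf_T z) * indicator D z \<partial>lborel) =
         (\<integral>\<^sup>+y. indicator A y * ennreal (h y) * indicator {0<..<1} y \<partial>lborel)"
proof -
  let ?I = "{min (mob M 0) (mob M 1) .. max (mob M 0) (mob M 1)}"
  let ?f = "\<lambda>z. ennreal (1/z) * indicator A (oocf_T z) * indicator D z"
  have mf: "?f \<in> borel_measurable borel" by measurable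
  have "(\<integral>\<^sup>+z. ?f z \<partial>lborel) = (\<integral>\<^sup>+z. ?f z * indicator ?I z \<partial>lborel)"
    using DI by (intro nn_integral_cong) (auto simp: indicator_def)
  also have "\<dots> = (\<integral>\<^sup>+y. ?f (mob M y) * ennreal (1 / (gd M y)^2) * indicator {0..1} y \<partial>lborel)"
    by (rule mob_subst[OF g _ _ mf]) auto
  also have "\<dots> = (\<integral>\<^sup>+y. indicator A y * ennreal (h y) * indicator {0<..<1} y \<partial>lborel)"
  proof (rule nn_integral_cong_AE)
    show "AE y in lborel. ?f (mob M y) * ennreal (1 / (gd M y)^2) * indicator {0..1} y =
                          indicator A y * ennreal (h y) * indicator {0<..<1} y"
      using AE_01
    proof eventually_elim
      case (elim y)
      show ?case
      proof (cases "0 < y \<and> y < 1")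
        case True
        have gp: "gd M y > 0" using goodM_gd[OF g, of y] True by linarith
        have mp: "mob M y > 0"
        proof -
          have "mob M y \<in> D" using inD True by blast
          then have "mob M y \<in> ?I" using DI by blast
          moreover have "mob M 0 \<ge> 0" "mob M 1 \<ge> 0"
            using g by (cases M; auto)+
          moreover have "mob M y \<noteq> 0"
          proof
            assume "mob M y = 0"
            then have "oocf_T (mob M y) = 0" by (simp add: oocf_T_def kx_def Let_def)
            then show False using Tm True by simp
          qed
          ultimately show ?thesis by (auto simp: min_def split: if_splits)
        qed
        have "ennreal (1 / mob M y) * ennreal (1 / (gd M y)^2) = ennreal (h y)"
          using h[of y] True mp gp by (simp add: ennreal_mult[symmetric])
        then show ?thesis using True inD[of y] Tm[of y]
          by (simp add: indicator_def mult.assoc)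
      next
        case False
        then show ?thesis using elim by (auto simp: indicator_def)
      qed
    qed
  qed
  finally show ?thesis .
qed


lemma gd_meas: "gd M \<in> borel_measurable borel"
proof (cases M)
  fix a b c d assume M: "M = (a,b,c,d)"
  have "gd M = (\<lambda>y. c*y+d)" using M by (simp add: fun_eq_iff)
  moreover have "(\<lambda>y::real. c*y+d) \<in> borel_measurable borel" by measurable
  ultimately show ?thesis by simp
qed

lemma h1_meas[measurable]: "h1 n \<in> borel_measurable borel"
proof -
  note [measurable] = mob_meas gd_meas
  show ?thesis unfolding h1_def[abs_def] by measurable
qed

lemma h2_meas[measurable]: "h2 n \<in> borel_measurable borel"
proof -
  note [measurable] = mob_meas gd_meas
  show ?thesis unfolding h2_def[abs_def] by measurable
qed

lemma sub1:
  assumes A: "A \<in> sets borel"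
  shows "(\<integral>\<^sup>+z. ennreal (1/z) * indicator A (oocf_T z) * indicator (D1 n) z \<partial>lborel) =
         (\<integral>\<^sup>+y. indicator A y * ennreal (h1 n y) * indicator {0<..<1} y \<partial>lborel)"
  by (rule sub_gen[OF A D1_borel goodM_B1 D1_I mob_B1_D])
     (use branch1(1)[of "Suc n"] in \<open>auto simp: h1_def\<close>)

lemma sub2:
  assumes A: "A \<in> sets borel"
  shows "(\<integral>\<^sup>+z. ennreal (1/z) * indicator A (oocf_T z) * indicator (D2 n) z \<partial>lborel) =
         (\<integral>\<^sup>+y. indicator A y * ennreal (h2 n y) * indicator {0<..<1} y \<partial>lborel)"
  by (rule sub_gen[OF A D2_borel goodM_B2 D2_I mob_B2_D])
     (use branch2(1)[of "Suc n"] in \<open>auto simp: h2_def\<close>)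

theorem nu_invariant:
  assumes A: "A \<in> sets nu"
  shows "emeasure nu (oocf_T -` A \<inter> space nu) = emeasure nu A"
proof -
  have A': "A \<subseteq> {0..1}" and Ab[measurable]: "A \<in> sets borel" using A sets_nu_iff by auto
  let ?P = "oocf_T -` A \<inter> {0..1}"
  have P: "?P \<in> sets nu" using measurable_sets[OF T_meas_nu A] by simp
  let ?F = "\<lambda>z. ennreal (1/z) * indicator A (oocf_T z)"
  let ?G1 = "\<lambda>n y. indicator A y * ennreal (h1 n y) * indicator {0<..<1::real} y"
  let ?G2 = "\<lambda>n y. indicator A y * ennreal (h2 n y) * indicator {0<..<1::real} y"
  have "emeasure nu ?P = (\<integral>\<^sup>+z. ennreal (1/z) * indicator ?P z \<partial>lborel)" by (rule emeasure_nu[OF P])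
  also have "\<dots> = (\<integral>\<^sup>+z. ?F z * indicator {0..<1} z \<partial>lborel)"
  proof (rule nn_integral_cong_AE)
    show "AE z in lborel. ennreal (1/z) * indicator ?P z = ?F z * indicator {0..<1} z"
      using AE_lborel_singleton[of 1] by eventually_elim (auto simp: indicator_def)
  qed
  also have "\<dots> = (\<integral>\<^sup>+z. (\<Sum>n. ?F z * indicator (D1 n) z + ?F z * indicator (D2 n) z) \<partial>lborel)"
    by (intro nn_integral_cong) (rule D_sum[symmetric])
  also have "\<dots> = (\<Sum>n. \<integral>\<^sup>+z. ?F z * indicator (D1 n) z + ?F z * indicator (D2 n) z \<partial>lborel)"
    by (rule nn_integral_suminf) measurable
  also have "\<dots> = (\<Sum>n. (\<integral>\<^sup>+y. ?G1 n y \<partial>lborel) + (\<integral>\<^sup>+y. ?G2 n y \<partial>lborel))"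
  proof (rule suminf_cong)
    fix n
    have "(\<integral>\<^sup>+z. ?F z * indicator (D1 n) z + ?F z * indicator (D2 n) z \<partial>lborel) =
          (\<integral>\<^sup>+z. ?F z * indicator (D1 n) z \<partial>lborel) + (\<integral>\<^sup>+z. ?F z * indicator (D2 n) z \<partial>lborel)"
      by (rule nn_integral_add) measurable
    then show "(\<integral>\<^sup>+z. ?F z * indicator (D1 n) z + ?F z * indicator (D2 n) z \<partial>lborel) =
          (\<integral>\<^sup>+y. ?G1 n y \<partial>lborel) + (\<integral>\<^sup>+y. ?G2 n y \<partial>lborel)"
      using sub1[OF Ab, of n] sub2[OF Ab, of n] by simp
  qed
  also have "\<dots> = (\<Sum>n. \<integral>\<^sup>+y. ?G1 n y + ?G2 n y \<partial>lborel)"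
    by (intro suminf_cong nn_integral_add[symmetric]) measurable
  also have "\<dots> = (\<integral>\<^sup>+y. (\<Sum>n. ?G1 n y + ?G2 n y) \<partial>lborel)"
    by (rule nn_integral_suminf[symmetric]) measurable
  also have "\<dots> = (\<integral>\<^sup>+y. ennreal (1/y) * indicator A y \<partial>lborel)"
  proof (rule nn_integral_cong_AE)
    show "AE y in lborel. (\<Sum>n. ?G1 n y + ?G2 n y) = ennreal (1/y) * indicator A y"
      using AE_01
    proof eventually_elim
      case (elim y)
      show ?case
      proof (cases "0 < y \<and> y < 1")
        case False
        then have "y \<notin> A" using elim A' by auto
        then show ?thesis by simp
      next
        case True
        have nn: "h1 n y \<ge> 0" "h2 n y \<ge> 0" for n using h1_props h2_props True by blast+
        have "(\<lambda>n. ?G1 n y + ?G2 n y) = (\<lambda>n. indicator A y * ennreal (h1 n y + h2 n y))"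
          using True nn by (simp add: fun_eq_iff ennreal_plus distrib_left)
        then have "(\<Sum>n. ?G1 n y + ?G2 n y) = indicator A y * (\<Sum>n. ennreal (h1 n y + h2 n y))"
          by simp
        also have "(\<Sum>n. ennreal (h1 n y + h2 n y)) = ennreal (\<Sum>n. h1 n y + h2 n y)"
          using nn h_series[of y] True by (intro suminf_ennreal2) (auto simp: sums_iff add_nonneg_nonneg)
        also have "(\<Sum>n. h1 n y + h2 n y) = 1/y" using h_series[of y] True by (simp add: sums_iff)
        finally show ?thesis by (simp add: mult.commute)
      qed
    qed
  qed
  also have "\<dots> = emeasure nu A" by (rule emeasure_nu[OF A, symmetric])
  finally show ?thesis by simp
qed


lemma emeasure_lebesgue_borel: "X \<in> sets borel \<Longrightarrow> emeasure lebesgue X = emeasure lborel X"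
  by (simp add: main_part_sets)

lemma pre_countable:
  assumes "countable Q"
  shows "countable {x \<in> {0..1}. oocf_T x \<in> Q}"
proof -
  have "{x \<in> {0..1}. oocf_T x \<in> Q} \<subseteq> {1} \<union> (\<Union>k. mob (B1 (real k)) ` Q \<union> mob (B2 (real k)) ` Q)"
  proof
    fix x assume x: "x \<in> {x \<in> {0..1}. oocf_T x \<in> Q}"
    show "x \<in> {1} \<union> (\<Union>k. mob (B1 (real k)) ` Q \<union> mob (B2 (real k)) ` Q)"
    proof (cases "x = 1")
      case False
      then have x01: "0 \<le> x" "x < 1" using x by auto
      have e: "x = mob (Bx x) (oocf_T x)" using decomp(3)[OF x01] by simp
      have "x \<in> mob (Bx x) ` Q" using e x by (metis (no_types, lifting) image_eqI mem_Collect_eq)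
      then have "x \<in> mob (B1 (real (kx x))) ` Q \<union> mob (B2 (real (kx x))) ` Q"
        using decomp(4)[OF x01] by auto
      then show ?thesis by blast
    qed simp
  qed
  moreover have "countable ({1} \<union> (\<Union>k. mob (B1 (real k)) ` Q \<union> mob (B2 (real k)) ` Q))"
    using assms by auto
  ultimately show ?thesis by (rule countable_subset)
qed

definition Exc :: "real set" where "Exc = {x \<in> {0..1}. \<not> goodorb x}"

lemma Exc_countable: "countable Exc"
proof -
  define P where "P i = {x \<in> {0..1::real}. (oocf_T ^^ i) x \<in> {0,1}}" for i
  have cP: "countable (P i)" for i
  proof (induction i)
    case 0
    have "P 0 \<subseteq> {0,1}" unfolding P_def by auto
    then show ?case by (rule countable_subset) simp
  next
    case (Suc i)
    have "P (Suc i) \<subseteq> {x \<in> {0..1}. oocf_T x \<in> P i}"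
      unfolding P_def using T_range funpow_T_Suc by auto
    then show ?case using pre_countable[OF Suc] countable_subset by blast
  qed
  have "Exc \<subseteq> (\<Union>i. P i)"
  proof
    fix x assume "x \<in> Exc"
    then have x: "x \<in> {0..1}" "\<not> goodorb x" by (auto simp: Exc_def)
    then obtain i where "(oocf_T^^i) x \<in> {0,1}" unfolding goodorb_def by blast
    then show "x \<in> (\<Union>i. P i)" using x(1) unfolding P_def by blast
  qed
  moreover have "countable (\<Union>i. P i)" using cP by (intro countable_UN) auto
  ultimately show ?thesis by (rule countable_subset)
qed

lemma Exc_borel[measurable]: "Exc \<in> sets borel"
  using countable_imp_null_set_lborel[OF Exc_countable] by (auto simp: null_sets_def)

lemma mat_ball:
  fixes M :: "real\<times>real\<times>real\<times>real"
  defines "p \<equiv> mob M (1/3)" and "q \<equiv> mob M 1"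
  shows "ball ((p+q)/2) (\<bar>q-p\<bar>/2) = {min p q<..<max p q}"
  unfolding ball_eq_greaterThanLessThan by (auto simp: min_def max_def abs_if field_simps)

lemma ball_dens:
  assumes M: "M \<in> R" and X: "X \<in> sets borel"
    and inv: "\<And>y. y \<in> {0..1} \<Longrightarrow> (mob M y \<in> X \<longleftrightarrow> y \<in> X)"
  defines "p \<equiv> mob M (1/3)" and "q \<equiv> mob M 1"
  shows "emeasure lborel (X \<inter> ball ((p+q)/2) (\<bar>q-p\<bar>/2)) \<ge>
         ennreal (1/2) * emeasure lborel (X \<inter> {1/3..1}) * emeasure lborel (ball ((p+q)/2) (\<bar>q-p\<bar>/2))"
proof -
  have g: "goodM M" using R_good M by blast
  let ?I = "{min p q..max p q}"
  let ?B = "ball ((p+q)/2) (\<bar>q-p\<bar>/2)"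
  have B: "?B = {min p q<..<max p q}" unfolding p_def q_def by (rule mat_ball)
  have gp: "gd M y > 0" if "y \<ge> 0" for y using goodM_gd[OF g that] by linarith
  define g1 where "g1 = gd M 1"
  define g3 where "g3 = gd M (1/3)"
  have g1p: "g1 > 0" and g3p: "g3 > 0" using gp g1_def g3_def by auto
  have g13: "g1 \<le> 3 * g3" using goodM_gd_third[OF g] g1_def g3_def by simp
  have diff: "q - p = mdet M * (1 - 1/3) / (g1 * g3)"
    using mob_diff[of M 1 "1/3"] gp[of 1] gp[of "1/3"] p_def q_def g1_def g3_def by simp
  have ad: "\<bar>q - p\<bar> = (2/3) / (g1 * g3)"
    using diff goodM_det[OF g] g1p g3p by (auto simp: abs_mult)
  have adle: "\<bar>q - p\<bar> / 2 \<le> 1 / g1^2"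
  proof -
    have "(2/3) / (g1 * g3) / 2 = 1 / (g1 * (3*g3))" by (simp add: field_simps)
    also have "\<dots> \<le> 1 / (g1 * g1)" using g13 g1p g3p
      by (intro divide_left_mono mult_left_mono) auto
    finally show ?thesis using ad by (simp add: power2_eq_square)
  qed
  have eB: "emeasure lborel ?B = ennreal \<bar>q - p\<bar>" unfolding B
    by (simp add: min_def max_def abs_if)
  have "emeasure lborel (X \<inter> ?I) \<ge> ennreal (1 / g1^2) * emeasure lborel (X \<inter> {1/3..1})"
    using dens_lemma[OF g _ _ X, of "1/3" 1] inv unfolding p_def q_def g1_def by auto
  moreover have "emeasure lborel (X \<inter> ?I) \<le> emeasure lborel (X \<inter> ?B)"
  proof -
    have "X \<inter> ?I \<subseteq> (X \<inter> ?B) \<union> {min p q, max p q}" unfolding B by auto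
    then have "emeasure lborel (X \<inter> ?I) \<le> emeasure lborel ((X \<inter> ?B) \<union> {min p q, max p q})"
      by (intro emeasure_mono) (use X in auto)
    also have "\<dots> \<le> emeasure lborel (X \<inter> ?B) + emeasure lborel {min p q, max p q}"
      by (intro emeasure_subadditive) (use X in auto)
    also have "emeasure lborel {min p q, max p q} = 0"
      by (intro emeasure_lborel_countable) auto
    finally show ?thesis by simp
  qed
  moreover have "ennreal (1/2) * emeasure lborel (X \<inter> {1/3..1}) * emeasure lborel ?B \<le>
                 ennreal (1 / g1^2) * emeasure lborel (X \<inter> {1/3..1})"
  proof -
    have "ennreal (1/2) * emeasure lborel ?B = ennreal (\<bar>q - p\<bar>/2)"
      unfolding eB by (subst ennreal_mult[symmetric]) auto
    also have "\<dots> \<le> ennreal (1 / g1^2)" using adle by (intro ennreal_leI)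
    finally have h: "ennreal (1/2) * emeasure lborel ?B \<le> ennreal (1 / g1^2)" .
    have "(ennreal (1/2) * emeasure lborel ?B) * emeasure lborel (X \<inter> {1/3..1}) \<le>
          ennreal (1 / g1^2) * emeasure lborel (X \<inter> {1/3..1})"
      by (rule mult_right_mono[OF h]) simp
    moreover have "ennreal (1/2) * emeasure lborel (X \<inter> {1/3..1}) * emeasure lborel ?B =
        (ennreal (1/2) * emeasure lborel ?B) * emeasure lborel (X \<inter> {1/3..1})"
      by (simp only: mult.assoc mult.commute[of "emeasure lborel (X \<inter> {1/3..1})" "emeasure lborel ?B"])
    ultimately show ?thesis by simp
  qed
  ultimately show ?thesis by (meson order_trans)
qed

lemma B21_R: "B2 1 \<in> R"
proof -
  have "mmul (B2 (real 1)) (1,0,0,1) \<in> R" by (rule R_2[OF R_id]) simp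
  then show ?thesis by (simp add: B2_def)
qed

lemma pos_J:
  assumes X: "X \<in> sets borel" "X \<subseteq> {0..1}" and pos: "emeasure lborel X > 0"
    and inv: "\<And>y. y \<in> {0..1} \<Longrightarrow> (mob (B2 1) y \<in> X \<longleftrightarrow> y \<in> X)"
  shows "emeasure lborel (X \<inter> {1/3..1}) > 0"
proof -
  have g: "goodM (B2 1)" using R_good B21_R by blast
  have m0: "mob (B2 1) 0 = 1/2" and m1: "mob (B2 1) 1 = 1/3" by (simp_all add: B2_def)
  have gd1: "gd (B2 1) 1 = 3" by (simp add: B2_def)
  have "emeasure lborel (X \<inter> {1/3..1/2}) \<ge> ennreal (1/9) * emeasure lborel (X \<inter> {0..1})"
    using dens_lemma[OF g _ _ X(1), of 0 1] inv m0 m1 gd1 by (auto simp: min_def max_def)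
  moreover have "X \<inter> {0..1} = X" using X by auto
  moreover have "emeasure lborel (X \<inter> {1/3..1/2}) \<le> emeasure lborel (X \<inter> {1/3..1})"
    by (intro emeasure_mono) (use X in auto)
  ultimately have "emeasure lborel (X \<inter> {1/3..1}) \<ge> ennreal (1/9) * emeasure lborel X" by simp
  moreover have "ennreal (1/9) * emeasure lborel X > 0" using pos by (simp add: ennreal_zero_less_mult_iff)
  ultimately show ?thesis by (meson less_le_trans)
qed


definition cen :: "real\<times>real\<times>real\<times>real \<Rightarrow> real" where
  "cen M = (mob M (1/3) + mob M 1) / 2"
definition rad :: "real\<times>real\<times>real\<times>real \<Rightarrow> real" where
  "rad M = \<bar>mob M 1 - mob M (1/3)\<bar> / 2"

lemma cover_step:
  assumes U: "open U" and xU: "x \<in> U" and gx: "goodorb x" and d: "0 < d"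
  shows "\<exists>M. (M \<in> R \<and> ball (cen M) (rad M) \<subseteq> U) \<and> x \<in> ball (cen M) (rad M) \<and> rad M < d"
proof -
  obtain \<delta> where \<delta>: "\<delta> > 0" "ball x \<delta> \<subseteq> U" using U xU open_contains_ball by blast
  have "min d (\<delta>/2) > 0" using d \<delta> by simp
  then obtain N where N: "(1/4::real)^N < min d (\<delta>/2)" using real_arch_pow_inv[of "min d (\<delta>/2)" "1/4"] by auto
  obtain j where j: "cnt j x \<ge> N" "(oocf_T ^^ j) x > 1/3" using big[OF gx] by blast
  define M where "M = Mat j x"
  define t where "t = (oocf_T ^^ j) x"
  have MP: "M \<in> R" "mob M t = x" "\<forall>z\<in>{0..1}. gd M z \<ge> 2 ^ (cnt j x)"
    using Mat_props[OF gx, of j] M_def t_def by auto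
  have g: "goodM M" using R_good MP(1) by blast
  have t01: "t \<in> {0..1}" using orbit_range gx goodorb_def t_def by blast
  have t1: "t \<noteq> 1" using gx unfolding goodorb_def t_def by auto
  have tt: "1/3 < t" "t < 1" using j t01 t1 t_def by auto
  define c where "c = cnt j x"
  have gge: "gd M z \<ge> 2^c" if "z \<in> {0..1}" for z using MP(3) that c_def by blast
  have gpos: "(2::real)^c > 0" by simp
  define p where "p = mob M (1/3)"
  define q where "q = mob M 1"
  have g1: "gd M 1 \<ge> 2^c" and g3: "gd M (1/3) \<ge> 2^c" and gt: "gd M t \<ge> 2^c"
    using gge t01 by auto
  have g1p: "gd M 1 > 0" and g3p: "gd M (1/3) > 0" and gtp: "gd M t > 0"
    using g1 g3 gt gpos by linarith+
  have d1: "x - p = mdet M * (t - 1/3) / (gd M t * gd M (1/3))"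
    using mob_diff[of M t "1/3"] g3p gtp MP(2) p_def by simp
  have d2: "q - x = mdet M * (1 - t) / (gd M 1 * gd M t)"
    using mob_diff[of M 1 t] g1p gtp MP(2) q_def by simp
  have xin: "x \<in> {min p q<..<max p q}"
  proof -
    have pos1: "(t - 1/3) / (gd M t * gd M (1/3)) > 0" using tt g3p gtp by simp
    have pos2: "(1 - t) / (gd M 1 * gd M t) > 0" using tt g1p gtp by simp
    consider "mdet M = 1" | "mdet M = -1" using goodM_det[OF g] by blast
    then show ?thesis
    proof cases
      case 1
      then have "p < x" "x < q" using d1 d2 pos1 pos2 by auto
      then show ?thesis by auto
    next
      case 2
      have D1: "gd M t * gd M (1/3) > 0" "gd M 1 * gd M t > 0" using g1p g3p gtp by auto
      have "x - p = (1/3 - t) / (gd M t * gd M (1/3))" using d1 2 by simp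
      also have "\<dots> < 0" using tt D1 by (intro divide_neg_pos) auto
      finally have a: "x < p" by simp
      have "q - x = (t - 1) / (gd M 1 * gd M t)" using d2 2 by simp
      also have "\<dots> < 0" using tt D1 by (intro divide_neg_pos) auto
      finally have b: "q < x" by simp
      show ?thesis using a b by auto
    qed
  qed
  have ball_eq: "ball (cen M) (rad M) = {min p q<..<max p q}"
    unfolding cen_def rad_def p_def q_def by (rule mat_ball)
  have xb: "x \<in> ball (cen M) (rad M)" using xin ball_eq by simp
  have rad_eq: "rad M = (1/3) / (gd M 1 * gd M (1/3))"
  proof -
    have "q - p = mdet M * (1 - 1/3) / (gd M 1 * gd M (1/3))"
      using mob_diff[of M 1 "1/3"] g1p g3p p_def q_def by simp
    then have "\<bar>q - p\<bar> = (2/3) / (gd M 1 * gd M (1/3))"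
      using goodM_det[OF g] g1p g3p by (auto simp: abs_mult)
    then show ?thesis unfolding rad_def p_def q_def by simp
  qed
  have "rad M \<le> (1/3) / (2^c * 2^c)"
  proof -
    have "2^c * 2^c \<le> gd M 1 * gd M (1/3)" using g1 g3 gpos g1p by (intro mult_mono) auto
    moreover have "(0::real) < 2^c * 2^c" using gpos by simp
    moreover have "0 < gd M 1 * gd M (1/3)" using g1p g3p by simp
    ultimately show ?thesis unfolding rad_eq by (intro divide_left_mono) (auto intro: mult_pos_pos)
  qed
  also have "\<dots> \<le> (1/4)^c"
  proof -
    have "(2::real)^c * 2^c = 4^c" by (simp add: power_mult_distrib[symmetric])
    then have e: "(1/3) / (2^c * 2^c) = (1/3) * (1/4::real)^c" by (simp add: power_one_over)
    have "(0::real) \<le> (1/4)^c" by simp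
    then show ?thesis unfolding e by linarith
  qed
  also have "\<dots> \<le> (1/4)^N" using j(1) c_def by (intro power_decreasing) auto
  finally have rsmall: "rad M < min d (\<delta>/2)" using N by linarith
  have sub: "ball (cen M) (rad M) \<subseteq> U"
  proof
    fix z assume z: "z \<in> ball (cen M) (rad M)"
    have "dist x z \<le> dist x (cen M) + dist (cen M) z" by (rule dist_triangle)
    also have "\<dots> < rad M + rad M" using z xb by (simp add: dist_commute add_strict_mono)
    also have "\<dots> < \<delta>" using rsmall by linarith
    finally have "z \<in> ball x \<delta>" by simp
    then show "z \<in> U" using \<delta> by blast
  qed
  show ?thesis using MP(1) sub xb rsmall by (intro exI[of _ M]) auto
qed


lemma core:
  assumes A[measurable]: "A \<in> sets borel" and S[measurable]: "S \<in> sets borel"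
    and AS: "A \<inter> S = {}" and S01: "S \<subseteq> {0..1}"
    and invA: "\<And>M y. M \<in> R \<Longrightarrow> y \<in> {0..1} \<Longrightarrow> (mob M y \<in> A \<longleftrightarrow> y \<in> A)"
    and eJ: "emeasure lborel (A \<inter> {1/3..1}) > 0" and eS: "emeasure lborel S > 0"
  shows False
proof -
  define J where "J = emeasure lborel (A \<inter> {1/3..1})"
  define c where "c = ennreal (1/2) * J * emeasure lborel S"
  have Jfin: "J < top"
  proof -
    have "J \<le> emeasure lborel {1/3..1::real}" unfolding J_def by (intro emeasure_mono) auto
    then show ?thesis by (simp add: le_less_trans)
  qed
  have Sfin: "emeasure lborel S < top"
  proof -
    have "emeasure lborel S \<le> emeasure lborel {0..1::real}" using S01 by (intro emeasure_mono) auto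
    then show ?thesis by (simp add: le_less_trans)
  qed
  have h2: "0 < ennreal (1/2)" by (rule ennreal_less_zero_iff[THEN iffD2]) simp
  have cpos: "c > 0" unfolding c_def J_def ennreal_zero_less_mult_iff using eJ eS h2 by blast
  have t1: "ennreal (1/2) * J < top"
    unfolding ennreal_mult_less_top using Jfin ennreal_less_top[of "1/2"] by blast
  have cfin: "c < top" unfolding c_def
    using Sfin t1 ennreal_mult_less_top[of "ennreal (1/2) * J" "emeasure lborel S"] by blast
  define e where "e = enn2real c"
  have ce: "ennreal e = c" using cfin cpos unfolding e_def by (simp add: ennreal_enn2real_if)
  have epos: "e > 0" using ce cpos by (metis ennreal_less_zero_iff)
  have Sl: "S \<in> sets lebesgue" by simp
  obtain U where U: "open U" "S \<subseteq> U" "emeasure lebesgue (U - S) < ennreal e"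
    using sets_lebesgue_outer_open[OF Sl epos] by blast
  have US[measurable]: "U - S \<in> sets borel" using U by simp
  have USm: "emeasure lborel (U - S) < c"
    using U(3) emeasure_lebesgue_borel[OF US] ce by simp
  define S' where "S' = S - Exc"
  define K where "K = {M \<in> R. ball (cen M) (rad M) \<subseteq> U}"
  have cover: "\<exists>M. M \<in> K \<and> x \<in> ball (cen M) (rad M) \<and> rad M < d" if "x \<in> S'" "0 < d" for x d
  proof -
    have xS: "x \<in> S" "x \<notin> Exc" using that S'_def by auto
    have x01: "x \<in> {0..1}" using xS S01 by blast
    have gx: "goodorb x" using x01 xS(2) unfolding Exc_def by blast
    show ?thesis using cover_step[OF U(1) _ gx that(2)] xS U(2) K_def by blast
  qed
  obtain C where C: "countable C" "C \<subseteq> K"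
    "pairwise (\<lambda>i j. disjnt (ball (cen i) (rad i)) (ball (cen j) (rad j))) C"
    "negligible (S' - (\<Union>M\<in>C. ball (cen M) (rad M)))"
    by (rule Vitali_covering_theorem_balls[of S' K cen rad]) (use cover in blast)
  define Bl where "Bl M = ball (cen M) (rad M)" for M
  let ?Bs = "\<Union>M\<in>C. Bl M"
  have Bl_borel[measurable]: "Bl M \<in> sets borel" for M unfolding Bl_def by simp
  have Bs_borel[measurable]: "?Bs \<in> sets borel" unfolding Bl_def by (intro borel_open) auto
  have disj: "disjoint_family_on Bl C"
    using C(3) unfolding disjoint_family_on_def pairwise_def disjnt_def Bl_def by blast
  have disjA: "disjoint_family_on (\<lambda>M. A \<inter> Bl M) C"
    using disj unfolding disjoint_family_on_def by blast
  have e1: "emeasure lborel ?Bs = (\<integral>\<^sup>+M. emeasure lborel (Bl M) \<partial>count_space C)"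
    by (rule emeasure_UN_countable[OF _ C(1) disj]) simp
  have e2: "emeasure lborel (A \<inter> ?Bs) = (\<integral>\<^sup>+M. emeasure lborel (A \<inter> Bl M) \<partial>count_space C)"
  proof -
    have "A \<inter> ?Bs = (\<Union>M\<in>C. A \<inter> Bl M)" by blast
    then show ?thesis using emeasure_UN_countable[OF _ C(1) disjA] by simp
  qed
  have e3: "emeasure lborel (A \<inter> ?Bs) \<ge> ennreal (1/2) * J * emeasure lborel ?Bs"
  proof -
    have "(\<integral>\<^sup>+M. ennreal (1/2) * J * emeasure lborel (Bl M) \<partial>count_space C) \<le>
          (\<integral>\<^sup>+M. emeasure lborel (A \<inter> Bl M) \<partial>count_space C)"
    proof (rule nn_integral_mono)
      fix M assume "M \<in> space (count_space C)"
      then have MR: "M \<in> R" using C(2) K_def by auto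
      show "ennreal (1/2) * J * emeasure lborel (Bl M) \<le> emeasure lborel (A \<inter> Bl M)"
        using ball_dens[OF MR A invA[OF MR]] unfolding Bl_def J_def cen_def rad_def by simp
    qed
    moreover have "(\<integral>\<^sup>+M. ennreal (1/2) * J * emeasure lborel (Bl M) \<partial>count_space C) =
                   ennreal (1/2) * J * (\<integral>\<^sup>+M. emeasure lborel (Bl M) \<partial>count_space C)"
      by (rule nn_integral_cmult) simp
    ultimately show ?thesis using e1 e2 by simp
  qed
  have e4: "emeasure lborel S \<le> emeasure lborel ?Bs"
  proof -
    define N where "N = (S' - ?Bs) \<union> Exc"
    have N1: "S' - ?Bs \<in> null_sets lborel"
    proof -
      have "S' - ?Bs \<in> null_sets lebesgue" using C(4) unfolding negligible_iff_null_sets Bl_def .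
      moreover have "S' - ?Bs \<in> sets lborel" unfolding S'_def by simp
      ultimately show ?thesis using null_sets_completion_iff by blast
    qed
    have N: "N \<in> null_sets lborel" unfolding N_def
      using N1 countable_imp_null_set_lborel[OF Exc_countable] by (rule null_sets.Un)
    have "S \<subseteq> ?Bs \<union> N" unfolding N_def S'_def by blast
    then have "emeasure lborel S \<le> emeasure lborel (?Bs \<union> N)"
      using N by (intro emeasure_mono) auto
    also have "\<dots> \<le> emeasure lborel ?Bs + emeasure lborel N"
      using N by (intro emeasure_subadditive) auto
    also have "emeasure lborel N = 0" using N by auto
    finally show ?thesis by simp
  qed
  have e5: "emeasure lborel (A \<inter> ?Bs) \<le> emeasure lborel (U - S)"
  proof (rule emeasure_mono)
    show "A \<inter> ?Bs \<subseteq> U - S" using C(2) K_def AS unfolding Bl_def by blast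
  qed simp
  have "c \<le> ennreal (1/2) * J * emeasure lborel ?Bs"
    unfolding c_def using e4 by (intro mult_left_mono) auto
  also have "\<dots> \<le> emeasure lborel (A \<inter> ?Bs)" by (rule e3)
  also have "\<dots> \<le> emeasure lborel (U - S)" by (rule e5)
  also have "\<dots> < c" by (rule USm)
  finally show False by simp
qed


lemma nu_null:
  assumes X: "X \<in> sets nu" and z: "emeasure lborel X = 0"
  shows "emeasure nu X = 0"
proof -
  have Xb: "X \<in> sets borel" using X sets_nu_iff by auto
  have N: "X \<in> null_sets lborel" using Xb z by (simp add: null_sets_def)
  have "emeasure nu X = (\<integral>\<^sup>+x. ennreal (1/x) * indicator X x \<partial>lborel)" by (rule emeasure_nu[OF X])
  also have "\<dots> = (\<integral>\<^sup>+x. 0 \<partial>(lborel::real measure))"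
  proof (rule nn_integral_cong_AE)
    show "AE x in lborel. ennreal (1/x) * indicator X x = 0"
      using AE_not_in[OF N] by eventually_elim simp
  qed
  finally show ?thesis by simp
qed

lemma nu_inf: "emeasure nu {0..1} = \<infinity>"
proof -
  have s: "{0..1} \<in> sets nu" by (simp add: sets_nu_iff)
  have ge: "ennreal (real n) \<le> emeasure nu {0..1}" for n
  proof -
    define a where "a = exp (- real n)"
    have a: "0 < a" "a \<le> 1" unfolding a_def by auto
    have "(\<integral>\<^sup>+x. ennreal (1/x) * indicator {a..1} x \<partial>lborel) = ennreal (ln 1 - ln a)"
    proof (rule nn_integral_FTC_Icc)
      show "(\<lambda>x::real. 1/x) \<in> borel_measurable borel" by measurable
      fix x assume x: "x \<in> {a..1}"
      then have "x > 0" using a by auto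
      then show "DERIV ln x :> 1/x" by (auto intro!: derivative_eq_intros)
      show "0 \<le> 1/x" using \<open>x > 0\<close> by simp
    qed (use a in auto)
    also have "ln 1 - ln a = real n" unfolding a_def by simp
    finally have e: "(\<integral>\<^sup>+x. ennreal (1/x) * indicator {a..1} x \<partial>lborel) = ennreal (real n)" .
    have "(\<integral>\<^sup>+x. ennreal (1/x) * indicator {a..1} x \<partial>lborel) \<le>
          (\<integral>\<^sup>+x. ennreal (1/x) * indicator {0..1} x \<partial>lborel)"
      using a by (intro nn_integral_mono) (auto simp: indicator_def)
    then show ?thesis using e emeasure_nu[OF s] by simp
  qed
  show ?thesis
  proof (rule ccontr)
    assume "emeasure nu {0..1} \<noteq> \<infinity>"
    then have "emeasure nu {0..1} < top" by (simp add: less_top)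
    then obtain r where r: "r \<ge> 0" "emeasure nu {0..1} = ennreal r" by (auto simp: less_top_ennreal)
    define n where "n = nat \<lceil>r\<rceil> + 1"
    have "ennreal (real n) \<le> ennreal r" using ge[of n] r by simp
    then have "real n \<le> r" using r by simp
    moreover have "real n > r" unfolding n_def by linarith
    ultimately show False by simp
  qed
qed

lemma nu_ergodic: "ergodic_map nu oocf_T"
  unfolding ergodic_map_def
proof (intro ballI impI)
  fix A assume A: "A \<in> sets nu" and inv: "oocf_T -` A \<inter> space nu = A"
  have A01: "A \<subseteq> {0..1}" and Ab: "A \<in> sets borel" using A sets_nu_iff by auto
  define S where "S = {0..1} - A"
  have Sb: "S \<in> sets borel" unfolding S_def using Ab by simp
  have S01: "S \<subseteq> {0..1}" unfolding S_def by auto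
  have Snu: "S \<in> sets nu" using Sb S01 sets_nu_iff by auto
  have AS: "A \<inter> S = {}" unfolding S_def by auto
  have inv': "oocf_T -` A \<inter> {0..1} = A" using inv by simp
  have invA: "\<And>M y. M \<in> R \<Longrightarrow> y \<in> {0..1} \<Longrightarrow> (mob M y \<in> A \<longleftrightarrow> y \<in> A)"
    using R_inv[OF inv'] by blast
  show "emeasure nu A = 0 \<or> emeasure nu (space nu - A) = 0"
  proof (rule ccontr)
    assume h: "\<not> ?thesis"
    then have nA: "emeasure nu A \<noteq> 0" and nS: "emeasure nu S \<noteq> 0" unfolding S_def by auto
    have lbA: "emeasure lborel A > 0"
    proof (rule ccontr)
      assume "\<not> ?thesis"
      then have "emeasure lborel A = 0" by (simp add: not_gr_zero)
      then show False using nu_null[OF A] nA by simp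
    qed
    have lbS: "emeasure lborel S > 0"
    proof (rule ccontr)
      assume "\<not> ?thesis"
      then have "emeasure lborel S = 0" by (simp add: not_gr_zero)
      then show False using nu_null[OF Snu] nS by simp
    qed
    have eJ: "emeasure lborel (A \<inter> {1/3..1}) > 0"
      by (rule pos_J[OF Ab A01 lbA invA[OF B21_R]])
    show False by (rule core[OF Ab Sb AS S01 invA eJ lbS])
  qed
qed

theorem proposition2p2:
  shows "measure_preserving_map nu oocf_T \<and> emeasure nu {0..1} = \<infinity> \<and> ergodic_map nu oocf_T"
proof (intro conjI)
  show "measure_preserving_map nu oocf_T"
    unfolding measure_preserving_map_def using T_meas_nu nu_invariant by blast
  show "emeasure nu {0..1} = \<infinity>" by (rule nu_inf)
  show "ergodic_map nu oocf_T" by (rule nu_ergodic)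
qed


end
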